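(* Let $p\ge 5$ be a prime and $G_7=\langle a,b,c\mid a^{p^2}=1=b^p=c^p,\ ba=a^{1+p}b,\ ca=a^{1+p}bc,\ cb=a^pbc\rangle$, with $K=\langle c\rangle$. Then $\mathrm{Aut}_K(G_7)\cong D_{2p}\times\mathbb{Z}_{p(p-1)}$.
   Context: $\mathrm{Aut}_K(G)=\{\theta\in\mathrm{Aut}(G)\mid\theta(K)=K\}$. $\mathbb{Z}_m$ is the cyclic group of order $m$ and $D_{2p}$ the dihedral group of order $2p$. *)

theory Defs
  imports "HOL-Algebra.Algebra"
begin

definition G7_relations :: "('a, 'm) monoid_scheme \<Rightarrow> nat \<Rightarrow> 'a \<Rightarrow> 'a \<Rightarrow> 'a \<Rightarrow> bool" where
  "G7_relations G p a b c \<longleftrightarrow>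
     a \<in> carrier G \<and> b \<in> carrier G \<and> c \<in> carrier G \<and>
     a [^]\<^bsub>G\<^esub> (p^2) = \<one>\<^bsub>G\<^esub> \<and> b [^]\<^bsub>G\<^esub> p = \<one>\<^bsub>G\<^esub> \<and> c [^]\<^bsub>G\<^esub> p = \<one>\<^bsub>G\<^esub> \<and>
     b \<otimes>\<^bsub>G\<^esub> a = a [^]\<^bsub>G\<^esub> (1 + p) \<otimes>\<^bsub>G\<^esub> b \<and>
     c \<otimes>\<^bsub>G\<^esub> a = a [^]\<^bsub>G\<^esub> (1 + p) \<otimes>\<^bsub>G\<^esub> b \<otimes>\<^bsub>G\<^esub> c \<and>
     c \<otimes>\<^bsub>G\<^esub> b = a [^]\<^bsub>G\<^esub> p \<otimes>\<^bsub>G\<^esub> b \<otimes>\<^bsub>G\<^esub> c"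

text \<open>Target groups are taken on the type nat, which suffices
  since the presented group is finite (hence countable), so this determines G up to
  isomorphism (von Dyck).\<close>
definition is_G7_presentation :: "'a monoid \<Rightarrow> nat \<Rightarrow> 'a \<Rightarrow> 'a \<Rightarrow> 'a \<Rightarrow> bool" where
  "is_G7_presentation G p a b c \<longleftrightarrow>
     group G \<and> G7_relations G p a b c \<and> generate G {a, b, c} = carrier G \<and>
     (\<forall>(H :: nat monoid) x y z. group H \<and> G7_relations H p x y z \<longrightarrow>
        (\<exists>h \<in> hom G H. h a = x \<and> h b = y \<and> h c = z))"

definition AutK :: "'a monoid \<Rightarrow> 'a set \<Rightarrow> ('a \<Rightarrow> 'a) monoid" where
  "AutK G K = (AutoGroup G) \<lparr>carrier := {\<theta> \<in> auto G. \<theta> ` K = K}\<rparr>"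

text \<open>Dihedral group of order 2n: elements (k, s) standing for r^k s^s,
  with r^n = 1, s^2 = 1, s r s = r^(-1).\<close>
definition dihedral_group :: "nat \<Rightarrow> (int \<times> bool) monoid" where
  "dihedral_group n =
     \<lparr>carrier = {0..<int n} \<times> UNIV,
      monoid.mult = (\<lambda>(k1, s1) (k2, s2). ((k1 + (if s1 then - k2 else k2)) mod int n, s1 \<noteq> s2)),
      one = (0, False)\<rparr>"

end

theory Submission
  imports Defs "HOL-Number_Theory.Number_Theory" "HOL-Library.Countable"
begin

locale g7 =
  fixes p :: nat
  assumes pp: "Factorial_Ring.prime p" and p5: "5 \<le> p"
begin

abbreviation "P \<equiv> int p"

definition rm :: "int \<times> int \<Rightarrow> int \<times> int \<Rightarrow> int \<times> int" where
  "rm x y = (fst x * fst y + P * (snd x * snd y), fst x * snd y + snd x * fst y)"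
definition ra :: "int \<times> int \<Rightarrow> int \<times> int \<Rightarrow> int \<times> int" where
  "ra x y = (fst x + fst y, snd x + snd y)"
definition rn :: "int \<times> int \<Rightarrow> int \<times> int" where
  "rn x = (- fst x, - snd x)"
definition nr :: "int \<times> int \<Rightarrow> int \<times> int" where
  "nr x = (fst x mod P^2, snd x mod P)"
definition req :: "int \<times> int \<Rightarrow> int \<times> int \<Rightarrow> bool" (infix "\<doteq>" 50) where
  "x \<doteq> y \<longleftrightarrow> nr x = nr y"
primrec rp :: "int \<times> int \<Rightarrow> nat \<Rightarrow> int \<times> int" where
  "rp x 0 = (1, 0)"
| "rp x (Suc n) = rm (rp x n) x"
definition hh :: int where "hh = (P + 1) div 2"
definition uu :: "int \<times> int" where "uu = (1 + P * hh, 1)"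
definition sg :: "int \<times> int \<Rightarrow> int \<times> int" where "sg x = (fst x, - snd x)"

lemma P_gt: "P \<ge> 5" using p5 by simp
lemma p_odd: "odd p"
  using pp p5 prime_odd_nat by force
lemma hh2: "2 * hh = P + 1"
  using p_odd unfolding hh_def by (metis even_add even_of_nat odd_one dvd_mult_div_cancel)

lemma req_refl[simp]: "x \<doteq> x" by (simp add: req_def)
lemma req_sym: "x \<doteq> y \<Longrightarrow> y \<doteq> x" by (simp add: req_def)
lemma req_trans[trans]: "x \<doteq> y \<Longrightarrow> y \<doteq> z \<Longrightarrow> x \<doteq> z" by (simp add: req_def)

lemma req_iff: "x \<doteq> y \<longleftrightarrow> [fst x = fst y] (mod P^2) \<and> [snd x = snd y] (mod P)"
  by (simp add: req_def nr_def cong_def prod_eq_iff)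

lemma nr_req: "nr x \<doteq> x"
  by (simp add: req_def nr_def)

lemma cong_P_of_P2: "[a = b] (mod P^2) \<Longrightarrow> [a = b] (mod P)"
  by (metis cong_dvd_modulus dvd_triv_left power2_eq_square)

lemma cong_P2_mult: "[a = b] (mod P) \<Longrightarrow> [P * a = P * b] (mod P^2)"
  by (metis cong_scalar_left cong_mult_lcancel power2_eq_square cong_def mod_mult_mult1)

lemma rm_cong: "x \<doteq> x' \<Longrightarrow> y \<doteq> y' \<Longrightarrow> rm x y \<doteq> rm x' y'"
  unfolding req_iff rm_def
  by (auto intro!: cong_add cong_mult cong_P2_mult dest: cong_P_of_P2)

lemma ra_cong: "x \<doteq> x' \<Longrightarrow> y \<doteq> y' \<Longrightarrow> ra x y \<doteq> ra x' y'"
  unfolding req_iff ra_def by (auto intro!: cong_add)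

lemma rn_cong: "x \<doteq> x' \<Longrightarrow> rn x \<doteq> rn x'"
  unfolding req_iff rn_def by (auto intro!: cong_minus_minus_iff[THEN iffD2])

lemma sg_cong: "x \<doteq> x' \<Longrightarrow> sg x \<doteq> sg x'"
  unfolding req_iff sg_def by (auto intro!: cong_minus_minus_iff[THEN iffD2])

lemma rp_cong: "x \<doteq> x' \<Longrightarrow> rp x n \<doteq> rp x' n"
  by (induction n) (auto intro: rm_cong)

lemma rm_assoc: "rm (rm x y) z = rm x (rm y z)"
  by (simp add: rm_def algebra_simps)
lemma rm_comm: "rm x y = rm y x"
  by (simp add: rm_def algebra_simps)
lemma rm_one[simp]: "rm (1,0) x = x" "rm x (1,0) = x"
  by (simp_all add: rm_def)
lemma rm_zero[simp]: "rm (0,0) x = (0,0)" "rm x (0,0) = (0,0)"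
  by (simp_all add: rm_def)
lemma ra_zero[simp]: "ra (0,0) x = x" "ra x (0,0) = x"
  by (simp_all add: ra_def)
lemma rm_ra: "rm x (ra y z) = ra (rm x y) (rm x z)"
  by (simp add: rm_def ra_def algebra_simps)
lemma ra_rm: "rm (ra y z) x = ra (rm y x) (rm z x)"
  by (simp add: rm_def ra_def algebra_simps)
lemma ra_assoc: "ra (ra x y) z = ra x (ra y z)"
  by (simp add: ra_def algebra_simps)
lemma ra_comm: "ra x y = ra y x"
  by (simp add: ra_def algebra_simps)
lemma ra_rn: "ra x (rn x) = (0,0)" "ra (rn x) x = (0,0)"
  by (simp_all add: ra_def rn_def)
lemma rm_rn: "rm x (rn y) = rn (rm x y)" "rm (rn y) x = rn (rm y x)"
  by (simp_all add: rm_def rn_def)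
lemma rp_add: "rp x (m + n) = rm (rp x m) (rp x n)"
  by (induction n) (simp_all add: rm_assoc)
lemma rp_mult: "rp x (m * n) = rp (rp x m) n"
  by (induction n) (simp_all add: rp_add rm_comm)
lemma rp_rm: "rp (rm x y) n = rm (rp x n) (rp y n)"
  by (induction n) (simp_all add: rm_assoc rm_comm rm_def algebra_simps)
lemma sg_rm: "sg (rm x y) = rm (sg x) (sg y)"
  by (simp add: sg_def rm_def)
lemma sg_ra: "sg (ra x y) = ra (sg x) (sg y)"
  by (simp add: sg_def ra_def)
lemma sg_rp: "sg (rp x n) = rp (sg x) n"
  by (induction n) (simp_all add: sg_rm, simp add: sg_def)
lemma sg_sg[simp]: "sg (sg x) = x" by (simp add: sg_def)


lemma cong_wit: "a - b = m * q \<Longrightarrow> [a = b] (mod m)" for a b m q :: int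
  by (metis cong_iff_lin cong_sym add.commute diff_add_cancel mult.commute)

lemma choose2_Suc: "int (Suc n choose 2) = int (n choose 2) + int n"
  by (simp add: numeral_2_eq_2)
lemma choose3_Suc: "int (Suc n choose 3) = int (n choose 3) + int (n choose 2)"
  by (simp add: numeral_3_eq_3 numeral_2_eq_2)

definition Eu :: "nat \<Rightarrow> int \<times> int" where
  "Eu n = (1 + P * (int n * hh + int (n choose 2)), int n)"

lemma rp_uu: "rp uu n \<doteq> Eu n"
proof (induction n)
  case 0 then show ?case by (simp add: Eu_def numeral_2_eq_2)
next
  case (Suc n)
  have "rp uu (Suc n) = rm (rp uu n) uu" by simp
  also have "\<dots> \<doteq> rm (Eu n) uu" by (rule rm_cong[OF Suc.IH req_refl])
  also have "rm (Eu n) uu \<doteq> Eu (Suc n)"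
    unfolding req_iff
  proof
    show "[fst (rm (Eu n) uu) = fst (Eu (Suc n))] (mod P\<^sup>2)"
      by (rule cong_wit[where q = "hh * (int n * hh + int (n choose 2))"])
         (simp add: rm_def Eu_def uu_def choose2_Suc algebra_simps power2_eq_square)
    show "[snd (rm (Eu n) uu) = snd (Eu (Suc n))] (mod P)"
      by (rule cong_wit[where q = "(int n * hh + int (n choose 2)) + int n * hh"])
         (simp add: rm_def Eu_def uu_def algebra_simps)
  qed
  finally show ?case .
qed

lemma P_dvd_choose: "0 < k \<Longrightarrow> k < p \<Longrightarrow> P dvd int (p choose k)"
  using dvd_choose_prime[of k p] pp by (simp add: int_dvd_int_iff)

lemma rp_uu_p: "rp uu p \<doteq> (1, 0)"
proof -
  have "rp uu p \<doteq> Eu p" by (rule rp_uu)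
  moreover have "Eu p \<doteq> (1,0)"
  proof -
    obtain q where q: "int (p choose 2) = P * q" using P_dvd_choose[of 2] p5 by (auto elim: dvdE)
    show ?thesis unfolding req_iff
    proof
      show "[fst (Eu p) = fst (1::int, 0::int)] (mod P\<^sup>2)"
        by (rule cong_wit[where q = "hh + q"]) (simp add: Eu_def q algebra_simps power2_eq_square)
      show "[snd (Eu p) = snd (1::int, 0::int)] (mod P)"
        by (rule cong_wit[where q = 1]) (simp add: Eu_def)
    qed
  qed
  ultimately show ?thesis by (rule req_trans)
qed

lemma rp_one_cong: "rp x n \<doteq> (1,0) \<Longrightarrow> rp x (n * m) \<doteq> (1,0)"
proof -
  assume a: "rp x n \<doteq> (1,0)"
  have "rp x (n*m) = rp (rp x n) m" by (rule rp_mult)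
  also have "\<dots> \<doteq> rp (1,0) m" by (rule rp_cong[OF a])
  also have "rp (1,0) m = (1,0)" by (induction m) simp_all
  finally show ?thesis by simp
qed

lemma rp_uu_mod: "rp uu n \<doteq> rp uu (n mod p)"
proof -
  have "rp uu n = rm (rp uu (p * (n div p))) (rp uu (n mod p))"
    by (metis div_mult_mod_eq mult.commute rp_add)
  also have "\<dots> \<doteq> rm (1,0) (rp uu (n mod p))"
    by (rule rm_cong[OF rp_one_cong[OF rp_uu_p] req_refl])
  finally show ?thesis by simp
qed

lemma uu_sg: "rm uu (sg uu) \<doteq> (1,0)"
  unfolding req_iff
  by (auto simp: rm_def uu_def sg_def power2_eq_square intro!: cong_wit[where q = "1 + hh*hh"]
     intro: cong_wit[where q = 0]) (use hh2 in \<open>simp add: algebra_simps\<close>)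


definition Hm :: "((int \<times> int) \<times> nat) monoid" where
  "Hm = \<lparr>carrier = {(x, k). nr x = x \<and> k < p},
         monoid.mult = (\<lambda>(x, k) (y, l). (nr (ra x (rm (rp uu k) y)), (k + l) mod p)),
         one = ((0, 0), 0)\<rparr>"

lemma Hm_carrier: "carrier Hm = {(x, k). nr x = x \<and> k < p}" by (simp add: Hm_def)
lemma Hm_mult: "(x, k) \<otimes>\<^bsub>Hm\<^esub> (y, l) = (nr (ra x (rm (rp uu k) y)), (k + l) mod p)"
  by (simp add: Hm_def)
lemma Hm_one: "\<one>\<^bsub>Hm\<^esub> = ((0, 0), 0)" by (simp add: Hm_def)

lemma nr_nr[simp]: "nr (nr x) = nr x" by (simp add: nr_def)
lemma nr_eqI: "a \<doteq> b \<Longrightarrow> nr a = nr b" by (simp add: req_def)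
lemma req_nrI: "a \<doteq> b \<Longrightarrow> nr a \<doteq> b" using nr_req req_trans by blast
lemma p_pos: "0 < p" using p5 by simp

lemma Hm_assoc:
  "nr (ra (nr (ra x (rm (rp uu k) y))) (rm (rp uu ((k + l) mod p)) z)) =
   nr (ra x (rm (rp uu k) (nr (ra y (rm (rp uu l) z)))))"
proof (rule nr_eqI)
  have "ra (nr (ra x (rm (rp uu k) y))) (rm (rp uu ((k + l) mod p)) z) \<doteq>
        ra (ra x (rm (rp uu k) y)) (rm (rp uu (k + l)) z)"
    by (intro ra_cong rm_cong nr_req req_refl req_sym[OF rp_uu_mod])
  also have "\<dots> = ra x (rm (rp uu k) (ra y (rm (rp uu l) z)))"
    by (simp add: rp_add rm_ra ra_assoc rm_assoc)
  also have "\<dots> \<doteq> ra x (rm (rp uu k) (nr (ra y (rm (rp uu l) z))))"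
    by (intro ra_cong rm_cong req_sym[OF nr_req] req_refl)
  finally show "ra (nr (ra x (rm (rp uu k) y))) (rm (rp uu ((k + l) mod p)) z) \<doteq>
    ra x (rm (rp uu k) (nr (ra y (rm (rp uu l) z))))" .
qed

lemma nr_zero[simp]: "nr (0,0) = (0,0)" by (simp add: nr_def)

lemma group_Hm: "group Hm"
proof (rule groupI)
  show "\<one>\<^bsub>Hm\<^esub> \<in> carrier Hm" by (simp add: Hm_carrier Hm_one p_pos)
next
  fix x y assume "x \<in> carrier Hm" "y \<in> carrier Hm"
  then show "x \<otimes>\<^bsub>Hm\<^esub> y \<in> carrier Hm"
    by (cases x, cases y) (simp add: Hm_carrier Hm_mult p_pos)
next
  fix x y z assume "x \<in> carrier Hm" "y \<in> carrier Hm" "z \<in> carrier Hm"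
  then show "x \<otimes>\<^bsub>Hm\<^esub> y \<otimes>\<^bsub>Hm\<^esub> z = x \<otimes>\<^bsub>Hm\<^esub> (y \<otimes>\<^bsub>Hm\<^esub> z)"
    by (cases x, cases y, cases z) (simp add: Hm_mult Hm_assoc mod_add_left_eq mod_add_right_eq add.assoc)
next
  fix x assume "x \<in> carrier Hm"
  then show "\<one>\<^bsub>Hm\<^esub> \<otimes>\<^bsub>Hm\<^esub> x = x"
    by (cases x) (simp add: Hm_carrier Hm_mult Hm_one)
next
  fix x assume x: "x \<in> carrier Hm"
  obtain v k where xv: "x = (v, k)" by (cases x)
  define k' where "k' = (p - k) mod p"
  have "(nr (rn (rm (rp uu k') v)), k') \<in> carrier Hm" by (simp add: Hm_carrier k'_def p_pos)
  moreover have "(nr (rn (rm (rp uu k') v)), k') \<otimes>\<^bsub>Hm\<^esub> x = \<one>\<^bsub>Hm\<^esub>"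
  proof -
    have "nr (ra (nr (rn (rm (rp uu k') v))) (rm (rp uu k') v)) = nr (ra (rn (rm (rp uu k') v)) (rm (rp uu k') v))"
      by (intro nr_eqI ra_cong nr_req req_refl)
    also have "\<dots> = (0,0)" by (simp add: ra_rn)
    finally show ?thesis using x
      by (simp add: xv Hm_mult Hm_one Hm_carrier k'_def)
         (metis le_add_diff_inverse2 less_imp_le_nat mod_add_left_eq mod_self)
  qed
  ultimately show "\<exists>y\<in>carrier Hm. y \<otimes>\<^bsub>Hm\<^esub> x = \<one>\<^bsub>Hm\<^esub>" by blast
qed


primrec rsum :: "(nat \<Rightarrow> int \<times> int) \<Rightarrow> nat \<Rightarrow> int \<times> int" where
  "rsum f 0 = (0, 0)"
| "rsum f (Suc n) = ra (rsum f n) (f n)"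

lemma rsum_cong: "(\<And>l. l < n \<Longrightarrow> f l \<doteq> g l) \<Longrightarrow> rsum f n \<doteq> rsum g n"
  by (induction n) (auto intro: ra_cong)

lemma sg_rsum: "sg (rsum f n) = rsum (\<lambda>l. sg (f l)) n"
  by (induction n) (simp_all add: sg_ra, simp add: sg_def)

definition Es :: "nat \<Rightarrow> int \<times> int" where
  "Es n = (int n + P * (hh * int (n choose 2) + int (n choose 3)), int (n choose 2))"

lemma rsum_uu: "rsum (rp uu) n \<doteq> Es n"
proof (induction n)
  case 0 then show ?case by (simp add: Es_def numeral_2_eq_2 numeral_3_eq_3)
next
  case (Suc n)
  have "rsum (rp uu) (Suc n) \<doteq> ra (Es n) (Eu n)"
    by (simp, intro ra_cong Suc.IH rp_uu)
  also have "ra (Es n) (Eu n) = Es (Suc n)"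
    by (simp add: ra_def Es_def Eu_def choose2_Suc choose3_Suc algebra_simps)
  finally show ?case .
qed

lemma rsum_uu_p: "rsum (rp uu) p \<doteq> (P, 0)"
proof -
  obtain q where q: "int (p choose 2) = P * q" using P_dvd_choose[of 2] p5 by (auto elim: dvdE)
  obtain r where r: "int (p choose 3) = P * r" using P_dvd_choose[of 3] p5 by (auto elim: dvdE)
  have "Es p \<doteq> (P, 0)"
    unfolding req_iff
  proof
    show "[fst (Es p) = fst (P, 0::int)] (mod P\<^sup>2)"
      by (rule cong_wit[where q = "hh * q + r"]) (simp add: Es_def q r algebra_simps power2_eq_square)
    show "[snd (Es p) = snd (P, 0::int)] (mod P)"
      by (rule cong_wit[where q = "q"]) (simp add: Es_def q)
  qed
  with rsum_uu show ?thesis by (rule req_trans)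
qed

lemma uu_pm1: "rp uu (p - 1) \<doteq> sg uu"
proof -
  have "rp uu (p - 1) = rm (rp uu (p - 1)) (1,0)" by simp
  also have "\<dots> \<doteq> rm (rp uu (p - 1)) (rm uu (sg uu))"
    by (intro rm_cong req_refl req_sym[OF uu_sg])
  also have "\<dots> = rm (rp uu p) (sg uu)"
  proof -
    have "rp uu (Suc (p - 1)) = rm (rp uu (p - 1)) uu" by simp
    then have "rp uu p = rm (rp uu (p - 1)) uu" using p_pos by simp
    then show ?thesis by (simp add: rm_assoc)
  qed
  also have "\<dots> \<doteq> rm (1,0) (sg uu)" by (intro rm_cong rp_uu_p req_refl)
  finally show ?thesis by simp
qed

lemma uu_pm1_pow: "rp uu (l * (p - 1)) \<doteq> sg (rp uu l)"
proof -
  have "rp uu (l * (p - 1)) = rp (rp uu (p - 1)) l" by (metis rp_mult mult.commute)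
  also have "\<dots> \<doteq> rp (sg uu) l" by (intro rp_cong uu_pm1)
  finally show ?thesis by (simp add: sg_rp)
qed


definition rsc :: "nat \<Rightarrow> int \<times> int \<Rightarrow> int \<times> int" where
  "rsc n x = (int n * fst x, int n * snd x)"

lemma Hm_pow_gen:
  assumes "(x, k) \<in> carrier Hm"
  shows "(x, k) [^]\<^bsub>Hm\<^esub> n = (nr (rm (rsum (\<lambda>l. rp uu (l * k)) n) x), (n * k) mod p)"
proof (induction n)
  case 0 then show ?case by (simp add: Hm_one)
next
  case (Suc n)
  have "(x, k) [^]\<^bsub>Hm\<^esub> Suc n = (nr (rm (rsum (\<lambda>l. rp uu (l * k)) n) x), (n * k) mod p) \<otimes>\<^bsub>Hm\<^esub> (x, k)"
    by (simp add: Suc.IH)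
  also have "\<dots> = (nr (rm (rsum (\<lambda>l. rp uu (l * k)) (Suc n)) x), (Suc n * k) mod p)"
  proof -
    have "nr (ra (nr (rm (rsum (\<lambda>l. rp uu (l * k)) n) x)) (rm (rp uu ((n * k) mod p)) x))
        = nr (rm (rsum (\<lambda>l. rp uu (l * k)) (Suc n)) x)"
    proof (rule nr_eqI)
      have "ra (nr (rm (rsum (\<lambda>l. rp uu (l * k)) n) x)) (rm (rp uu ((n * k) mod p)) x)
          \<doteq> ra (rm (rsum (\<lambda>l. rp uu (l * k)) n) x) (rm (rp uu (n * k)) x)"
        by (intro ra_cong rm_cong nr_req req_refl req_sym[OF rp_uu_mod])
      also have "\<dots> = rm (rsum (\<lambda>l. rp uu (l * k)) (Suc n)) x" by (simp add: ra_rm)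
      finally show "ra (nr (rm (rsum (\<lambda>l. rp uu (l * k)) n) x)) (rm (rp uu ((n * k) mod p)) x)
          \<doteq> rm (rsum (\<lambda>l. rp uu (l * k)) (Suc n)) x" .
    qed
    then show ?thesis by (simp add: Hm_mult mod_add_right_eq add.commute)
  qed
  finally show ?case .
qed

lemma rsum_zero_pow: "rsum (\<lambda>l. (1, 0)) n = (int n, 0)"
  by (induction n) (simp_all add: ra_def)

lemma Hm_pow_M:
  assumes "nr x = x"
  shows "(x, 0) [^]\<^bsub>Hm\<^esub> n = (nr (rsc n x), 0)"
proof -
  have "(x, 0) \<in> carrier Hm" using assms p_pos by (simp add: Hm_carrier)
  then show ?thesis by (simp add: Hm_pow_gen rsum_zero_pow rm_def rsc_def)
qed

lemma rm_sc: "rm (int n, 0) x = rsc n x" by (simp add: rm_def rsc_def)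

lemma rsc_cong: "x \<doteq> y \<Longrightarrow> rsc n x \<doteq> rsc n y"
  by (simp add: rm_sc[symmetric] rm_cong)

definition dd :: "(int \<times> int) \<times> nat" where "dd = ((1, 0), 0)"
definition bb :: "(int \<times> int) \<times> nat" where "bb = ((P * hh, 1), 0)"
definition cc :: "(int \<times> int) \<times> nat" where "cc = ((0, 0), 1)"
definition aa :: "(int \<times> int) \<times> nat" where "aa = ((1, 0), p - 1)"

lemma hh_bounds: "0 < hh" "hh < P" using hh2 P_gt by linarith+

lemma nr_bb: "nr (P * hh, 1) = (P * hh, 1)"
proof -
  have "P * hh < P * P" using hh_bounds P_gt by (intro mult_strict_left_mono) auto
  moreover have "0 \<le> P * hh" using hh_bounds P_gt by simp
  ultimately have "P * hh mod P^2 = P * hh" by (simp add: power2_eq_square)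
  moreover have "1 mod P = 1" using P_gt by simp
  ultimately show ?thesis by (simp add: nr_def)
qed

lemma nr_1: "nr (1, 0) = (1, 0)"
proof -
  have "(5::int) * 5 \<le> P * P" using P_gt by (intro mult_mono) auto
  then have "(1::int) < P^2" by (simp add: power2_eq_square)
  then have "(1::int) mod P^2 = 1" by simp
  then show ?thesis by (simp add: nr_def)
qed

lemma in_Hm: "dd \<in> carrier Hm" "bb \<in> carrier Hm" "cc \<in> carrier Hm" "aa \<in> carrier Hm"
  unfolding Hm_carrier dd_def bb_def cc_def aa_def mem_Collect_eq split
  using nr_bb nr_1 p5 by auto

end

context g7
begin

lemma cong_mod_nr: "[a = b] (mod m) \<Longrightarrow> a mod m = b mod m" by (simp add: cong_def)

lemma rp_sg_uu_pow: "rsum (\<lambda>l. rp uu (l * (p - 1))) n \<doteq> sg (rsum (rp uu) n)"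
  unfolding sg_rsum by (rule rsum_cong) (rule uu_pm1_pow)

lemma aa_pow_p: "aa [^]\<^bsub>Hm\<^esub> p = ((P, 0), 0)"
proof -
  have "aa [^]\<^bsub>Hm\<^esub> p = (nr (rm (rsum (\<lambda>l. rp uu (l * (p - 1))) p) (1, 0)), (p * (p - 1)) mod p)"
    unfolding aa_def by (rule Hm_pow_gen[OF in_Hm(4)[unfolded aa_def]])
  also have "nr (rm (rsum (\<lambda>l. rp uu (l * (p - 1))) p) (1, 0)) = nr (sg (P, 0))"
    unfolding rm_one(2) by (rule nr_eqI) (intro req_trans[OF rp_sg_uu_pow] sg_cong rsum_uu_p)
  also have "nr (sg (P, 0)) = (P, 0)"
  proof -
    have "P < P^2" using P_gt by (simp add: power2_eq_square)
    then show ?thesis using P_gt by (simp add: sg_def nr_def)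
  qed
  finally show ?thesis by simp
qed

lemma P2_mod: "P^2 mod P^2 = 0" by simp

lemma aa_pow_p2: "aa [^]\<^bsub>Hm\<^esub> (p^2) = \<one>\<^bsub>Hm\<^esub>"
proof -
  interpret group Hm by (rule group_Hm)
  have "aa [^]\<^bsub>Hm\<^esub> (p^2) = (aa [^]\<^bsub>Hm\<^esub> p) [^]\<^bsub>Hm\<^esub> p"
    by (simp add: nat_pow_pow in_Hm power2_eq_square)
  also have "\<dots> = (nr (rsc p (P, 0)), 0)"
    unfolding aa_pow_p by (rule Hm_pow_M) (use P_gt in \<open>simp add: nr_def power2_eq_square\<close>)
  also have "\<dots> = \<one>\<^bsub>Hm\<^esub>" by (simp add: rsc_def nr_def Hm_one power2_eq_square)
  finally show ?thesis .
qed


lemma nr_eq_wit: "fst a - fst b = P^2 * qa \<Longrightarrow> snd a - snd b = P * qb \<Longrightarrow> nr a = nr b"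
  for qa qb :: int
  unfolding req_iff[symmetric] req_def[symmetric]
  using cong_wit[of "fst a" "fst b" "P^2" qa] cong_wit[of "snd a" "snd b" P qb]
  by (simp add: req_iff)

lemma rp_uu_1: "rp uu 1 = uu" by simp

lemma nr_P1: "nr (P + 1, 0) = (P + 1, 0)"
proof -
  have "P * 5 \<le> P * P" using P_gt by (intro mult_left_mono) auto
  then have "P + 1 < P^2" using P_gt unfolding power2_eq_square by linarith
  then show ?thesis using P_gt by (simp add: nr_def)
qed

lemma aa_pow_Sp: "aa [^]\<^bsub>Hm\<^esub> (1 + p) = ((P + 1, 0), p - 1)"
proof -
  interpret group Hm by (rule group_Hm)
  have "aa [^]\<^bsub>Hm\<^esub> (1 + p) = aa [^]\<^bsub>Hm\<^esub> p \<otimes>\<^bsub>Hm\<^esub> aa" by simp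
  also have "\<dots> = ((P + 1, 0), p - 1)"
    using nr_P1 p_pos unfolding aa_pow_p by (simp add: aa_def Hm_mult ra_def)
  finally show ?thesis .
qed

lemma rel_b: "bb \<otimes>\<^bsub>Hm\<^esub> aa = aa [^]\<^bsub>Hm\<^esub> (1 + p) \<otimes>\<^bsub>Hm\<^esub> bb"
proof -
  have "nr (ra (P + 1, 0) (rm (rp uu (p - 1)) (P * hh, 1))) = nr (ra (P + 1, 0) (rm (sg uu) (P * hh, 1)))"
    by (intro nr_eqI ra_cong rm_cong uu_pm1 req_refl)
  also have "\<dots> = nr (ra (P * hh, 1) (1, 0))"
    by (rule nr_eq_wit[where qa = "hh * hh" and qb = 0]) (simp_all add: ra_def rm_def sg_def uu_def algebra_simps power2_eq_square)
  finally show ?thesis using p_pos unfolding aa_pow_Sp by (simp add: aa_def bb_def Hm_mult)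
qed

lemma rel_c: "cc \<otimes>\<^bsub>Hm\<^esub> aa = aa [^]\<^bsub>Hm\<^esub> (1 + p) \<otimes>\<^bsub>Hm\<^esub> bb \<otimes>\<^bsub>Hm\<^esub> cc"
proof -
  have "nr (ra (P + 1, 0) (rm (rp uu (p - 1)) (P * hh, 1))) = nr (ra (P * hh, 1) (1, 0))"
    using rel_b p_pos unfolding aa_pow_Sp by (simp add: aa_def bb_def Hm_mult)
  moreover have "nr (ra (P * hh, 1) (1, 0)) = nr uu"
    by (simp add: ra_def uu_def add.commute)
  ultimately show ?thesis using p_pos unfolding aa_pow_Sp
    by (simp add: aa_def bb_def cc_def Hm_mult)
qed

lemma rel_cb: "cc \<otimes>\<^bsub>Hm\<^esub> bb = aa [^]\<^bsub>Hm\<^esub> p \<otimes>\<^bsub>Hm\<^esub> bb \<otimes>\<^bsub>Hm\<^esub> cc"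
proof -
  have "nr (rm uu (P * hh, 1)) = nr (ra (P, 0) (P * hh, 1))"
  proof (rule nr_eq_wit[where qa = "hh * hh" and qb = "P + 1"])
    have e: "P * (2 * hh) = P * (P + 1)" by (simp only: hh2)
    show "fst (rm uu (P * hh, 1)) - fst (ra (P, 0) (P * hh, 1)) = P\<^sup>2 * (hh * hh)"
      by (simp add: ra_def rm_def uu_def algebra_simps power2_eq_square)
    show "snd (rm uu (P * hh, 1)) - snd (ra (P, 0) (P * hh, 1)) = P * (P + 1)"
      using e by (simp add: ra_def rm_def uu_def algebra_simps power2_eq_square)
  qed
  then show ?thesis using p_pos unfolding aa_pow_p
    by (simp add: bb_def cc_def Hm_mult)
qed

lemma bb_pow_p: "bb [^]\<^bsub>Hm\<^esub> p = \<one>\<^bsub>Hm\<^esub>"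
  unfolding bb_def
  by (subst Hm_pow_M[OF nr_bb]) (simp add: rsc_def nr_def Hm_one power2_eq_square)

lemma cc_pow: "cc [^]\<^bsub>Hm\<^esub> n = ((0, 0), n mod p)"
  using Hm_pow_gen[OF in_Hm(3)[unfolded cc_def], of n] by (simp add: cc_def)

lemma G7_Hm: "G7_relations Hm p aa bb cc"
  unfolding G7_relations_def
  using in_Hm aa_pow_p2 bb_pow_p cc_pow[of p] rel_b rel_c rel_cb by (simp add: Hm_one)

end

context g7
begin

lemma nr_id_iff: "nr x = x \<longleftrightarrow> 0 \<le> fst x \<and> fst x < P^2 \<and> 0 \<le> snd x \<and> snd x < P"
proof -
  have "0 < P^2" using P_gt by simp
  have P0: "0 < P" using P_gt by simp
  show ?thesis
  proof
    assume "nr x = x"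
    then have "fst x mod P^2 = fst x" "snd x mod P = snd x" by (auto simp: nr_def prod_eq_iff)
    then show "0 \<le> fst x \<and> fst x < P^2 \<and> 0 \<le> snd x \<and> snd x < P"
      using pos_mod_sign[OF P0] pos_mod_bound[OF P0] pos_mod_sign[OF \<open>0 < P^2\<close>] pos_mod_bound[OF \<open>0 < P^2\<close>]
      by metis
  qed (auto simp: nr_def prod_eq_iff)
qed

lemma Hm_carrier_eq: "carrier Hm = ({0..<P^2} \<times> {0..<P}) \<times> {..<p}"
  by (auto simp: Hm_carrier nr_id_iff)

lemma card_Hm: "card (carrier Hm) = p^4"
proof -
  have a: "card {0..<P^2} = p^2" by (simp flip: of_nat_power)
  have b: "card {0..<P} = p" by simp
  have "card (carrier Hm) = card {0..<P^2} * card {0..<P} * card {..<p}"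
    unfolding Hm_carrier_eq by (simp add: card_cartesian_product)
  also have "\<dots> = p^4" unfolding a b by (simp add: power_numeral_reduce)
  finally show ?thesis .
qed

lemma finite_Hm: "finite (carrier Hm)"
  unfolding Hm_carrier_eq by simp

lemma dd_eq: "dd = aa \<otimes>\<^bsub>Hm\<^esub> cc"
  using p_pos nr_1 by (simp add: aa_def cc_def dd_def Hm_mult ra_def)

lemma gen_pow: "x \<in> generate Hm S \<Longrightarrow> x [^]\<^bsub>Hm\<^esub> (n::nat) \<in> generate Hm S"
  by (induction n) (auto intro: generate.eng generate.one)

lemma gen_Hm: "generate Hm {aa, bb, cc} = carrier Hm"
proof
  interpret group Hm by (rule group_Hm)
  show "generate Hm {aa, bb, cc} \<subseteq> carrier Hm"
    by (rule generate_incl) (use in_Hm in auto)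
  show "carrier Hm \<subseteq> generate Hm {aa, bb, cc}"
  proof
    fix z assume z: "z \<in> carrier Hm"
    obtain \<alpha> \<beta> k where zz: "z = ((\<alpha>, \<beta>), k)" by (metis prod.collapse)
    have zc: "nr (\<alpha>, \<beta>) = (\<alpha>, \<beta>)" "k < p" using z by (auto simp: zz Hm_carrier)
    then have b0: "0 \<le> \<beta>" by (simp add: nr_id_iff)
    let ?S = "generate Hm {aa, bb, cc}"
    have dS: "dd \<in> ?S" unfolding dd_eq by (auto intro: generate.eng generate.incl)
    have bS: "bb \<in> ?S" "cc \<in> ?S" by (auto intro: generate.incl)
    define m where "m = nat ((\<alpha> - \<beta> * (P * hh)) mod P^2)"
    define n where "n = nat \<beta>"
    have m: "int m = (\<alpha> - \<beta> * (P * hh)) mod P^2" unfolding m_def using P_gt by simp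
    have n: "int n = \<beta>" unfolding n_def using b0 by simp
    have "dd [^]\<^bsub>Hm\<^esub> m \<otimes>\<^bsub>Hm\<^esub> bb [^]\<^bsub>Hm\<^esub> n \<otimes>\<^bsub>Hm\<^esub> cc [^]\<^bsub>Hm\<^esub> k = z"
    proof -
      have "nr (ra (nr (rsc m (1, 0))) (rm (1, 0) (nr (rsc n (P * hh, 1))))) = nr (\<alpha>, \<beta>)"
      proof (rule nr_eqI)
        have "ra (nr (rsc m (1, 0))) (rm (1, 0) (nr (rsc n (P * hh, 1)))) \<doteq> ra (rsc m (1, 0)) (rsc n (P * hh, 1))"
          by (simp, intro ra_cong nr_req)
        also have "\<dots> \<doteq> (\<alpha>, \<beta>)"
          unfolding req_iff
        proof
          show "[fst (ra (rsc m (1, 0)) (rsc n (P * hh, 1))) = fst (\<alpha>, \<beta>)] (mod P\<^sup>2)"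
            by (simp add: ra_def rsc_def m n cong_def mod_add_left_eq)
          show "[snd (ra (rsc m (1, 0)) (rsc n (P * hh, 1))) = snd (\<alpha>, \<beta>)] (mod P)"
            by (simp add: ra_def rsc_def n)
        qed
        finally show "ra (nr (rsc m (1, 0))) (rm (1, 0) (nr (rsc n (P * hh, 1)))) \<doteq> (\<alpha>, \<beta>)" .
      qed
      then show ?thesis
        unfolding dd_def bb_def cc_pow
        using zc by (simp add: Hm_pow_M nr_1 nr_bb Hm_mult zz)
    qed
    moreover have "dd [^]\<^bsub>Hm\<^esub> m \<otimes>\<^bsub>Hm\<^esub> bb [^]\<^bsub>Hm\<^esub> n \<otimes>\<^bsub>Hm\<^esub> cc [^]\<^bsub>Hm\<^esub> k \<in> ?S"
      using dS bS by (intro generate.eng gen_pow)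
    ultimately show "z \<in> ?S" by simp
  qed
qed

end

context g7
begin

definition sgc :: "bool \<Rightarrow> int \<times> int \<Rightarrow> int \<times> int" where
  "sgc s x = (if s then sg x else x)"
definition ek :: "bool \<Rightarrow> nat \<Rightarrow> nat" where
  "ek s k = (if s then (k * (p - 1)) mod p else k)"
definition TT :: "bool \<Rightarrow> int \<times> int \<Rightarrow> (int \<times> int) \<times> nat \<Rightarrow> (int \<times> int) \<times> nat" where
  "TT s r = (\<lambda>z \<in> carrier Hm. (nr (rm r (sgc s (fst z))), ek s (snd z)))"

lemma sgc_cong: "x \<doteq> y \<Longrightarrow> sgc s x \<doteq> sgc s y"
  by (simp add: sgc_def sg_cong)
lemma sgc_rm: "sgc s (rm x y) = rm (sgc s x) (sgc s y)"
  by (simp add: sgc_def sg_rm)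
lemma sgc_ra: "sgc s (ra x y) = ra (sgc s x) (sgc s y)"
  by (simp add: sgc_def sg_ra)
lemma sgc_sgc: "sgc s (sgc s x) = x" by (simp add: sgc_def)
lemma sgc_one[simp]: "sgc s (1, 0) = (1, 0)" by (simp add: sgc_def sg_def)
lemma sgc_nr: "sgc s (nr x) \<doteq> sgc s x" by (intro sgc_cong nr_req)

lemma ek_lt: "k < p \<Longrightarrow> ek s k < p" using p_pos by (simp add: ek_def)

lemma sgc_uu: "sgc s (rp uu k) \<doteq> rp uu (ek s k)"
proof (cases s)
  case True
  have "sg (rp uu k) \<doteq> rp uu (k * (p - 1))" by (rule req_sym[OF uu_pm1_pow])
  also have "\<dots> \<doteq> rp uu (k * (p - 1) mod p)" by (rule rp_uu_mod)
  finally show ?thesis using True by (simp add: sgc_def ek_def)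
qed (simp add: sgc_def ek_def)

lemma ek_add: "(ek s k + ek s l) mod p = ek s ((k + l) mod p)"
  by (simp add: ek_def mod_add_eq mod_mult_left_eq add_mult_distrib)

lemma pm1_sq: "((p - 1) * (p - 1)) mod p = 1"
proof -
  define q where "q = p - 2"
  have q: "p = q + 2" using p5 unfolding q_def by simp
  have "(q + 1) * (q + 1) = q * (q + 2) + 1" by (simp add: algebra_simps)
  then have e: "((p - 1) * (p - 1)) = q * p + 1" using q by simp
  have "(1 + q * p) mod p = 1 mod p" by (rule mod_mult_self1)
  moreover have "(1::nat) mod p = 1" using p5 by simp
  ultimately show ?thesis using e by (simp add: add.commute)
qed

lemma pm1_sq': "((p - Suc 0) * (p - Suc 0)) mod p = 1" using pm1_sq by simp

lemma ek_ek: "k < p \<Longrightarrow> ek s1 (ek s2 k) = ek (s1 \<noteq> s2) k"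
proof -
  assume k: "k < p"
  have "(k * (p - 1) mod p * (p - 1)) mod p = k"
  proof -
    have "(k * (p - 1) mod p * (p - 1)) mod p = (k * ((p - 1) * (p - 1))) mod p"
      by (simp add: mod_mult_left_eq mult.assoc)
    also have "\<dots> = (k * (((p - 1) * (p - 1)) mod p)) mod p" by (simp add: mod_mult_right_eq)
    also have "\<dots> = k" using k by (simp add: pm1_sq pm1_sq')
    finally show ?thesis .
  qed
  then show ?thesis using k by (simp add: ek_def)
qed

lemma TT_in: "z \<in> carrier Hm \<Longrightarrow> TT s r z \<in> carrier Hm"
  by (cases z) (simp add: TT_def Hm_carrier ek_lt)

lemma TT_cong: "r \<doteq> r' \<Longrightarrow> TT s r = TT s r'"
  unfolding TT_def by (intro ext) (simp add: nr_eqI rm_cong)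

lemma TT_hom: "TT s r \<in> hom Hm Hm"
proof (rule homI)
  fix z assume "z \<in> carrier Hm" then show "TT s r z \<in> carrier Hm" by (rule TT_in)
next
  interpret group Hm by (rule group_Hm)
  fix z1 z2 assume z1: "z1 \<in> carrier Hm" and z2: "z2 \<in> carrier Hm"
  obtain x k where zz1: "z1 = (x, k)" by (cases z1)
  obtain y l where zz2: "z2 = (y, l)" by (cases z2)
  have kl: "k < p" "l < p" using z1 z2 by (auto simp: zz1 zz2 Hm_carrier)
  have m: "z1 \<otimes>\<^bsub>Hm\<^esub> z2 \<in> carrier Hm" using z1 z2 by simp
  have "nr (rm r (sgc s (nr (ra x (rm (rp uu k) y))))) =
        nr (ra (nr (rm r (sgc s x))) (rm (rp uu (ek s k)) (nr (rm r (sgc s y)))))"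
  proof (rule nr_eqI)
    have "rm r (sgc s (nr (ra x (rm (rp uu k) y)))) \<doteq> rm r (sgc s (ra x (rm (rp uu k) y)))"
      by (intro rm_cong req_refl sgc_nr)
    also have "\<dots> = ra (rm r (sgc s x)) (rm (sgc s (rp uu k)) (rm r (sgc s y)))"
      by (simp add: sgc_ra sgc_rm rm_ra rm_assoc[symmetric] rm_comm)
    also have "\<dots> \<doteq> ra (nr (rm r (sgc s x))) (rm (rp uu (ek s k)) (nr (rm r (sgc s y))))"
      by (intro ra_cong rm_cong req_sym[OF nr_req] sgc_uu)
    finally show "rm r (sgc s (nr (ra x (rm (rp uu k) y)))) \<doteq>
        ra (nr (rm r (sgc s x))) (rm (rp uu (ek s k)) (nr (rm r (sgc s y))))" .
  qed
  then show "TT s r (z1 \<otimes>\<^bsub>Hm\<^esub> z2) = TT s r z1 \<otimes>\<^bsub>Hm\<^esub> TT s r z2"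
    using z1 z2 m by (simp add: TT_def zz1 zz2 Hm_mult ek_add)
qed

lemma TT_comp: "z \<in> carrier Hm \<Longrightarrow> TT s1 r1 (TT s2 r2 z) = TT (s1 \<noteq> s2) (rm r1 (sgc s1 r2)) z"
proof -
  assume z: "z \<in> carrier Hm"
  obtain x k where zz: "z = (x, k)" by (cases z)
  have k: "k < p" using z by (simp add: zz Hm_carrier)
  have "nr (rm r1 (sgc s1 (nr (rm r2 (sgc s2 x))))) = nr (rm (rm r1 (sgc s1 r2)) (sgc (s1 \<noteq> s2) x))"
  proof (rule nr_eqI)
    have "rm r1 (sgc s1 (nr (rm r2 (sgc s2 x)))) \<doteq> rm r1 (sgc s1 (rm r2 (sgc s2 x)))"
      by (intro rm_cong req_refl sgc_nr)
    also have "\<dots> = rm (rm r1 (sgc s1 r2)) (sgc (s1 \<noteq> s2) x)"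
      by (cases s1; cases s2) (simp_all add: sgc_def sg_rm rm_assoc)
    finally show "rm r1 (sgc s1 (nr (rm r2 (sgc s2 x)))) \<doteq> rm (rm r1 (sgc s1 r2)) (sgc (s1 \<noteq> s2) x)" .
  qed
  then show ?thesis using z TT_in[OF z, of s2 r2] k
    by (simp add: TT_def zz ek_ek)
qed

lemma TT_id: "TT False (1, 0) = (\<lambda>z \<in> carrier Hm. z)"
  unfolding TT_def by (intro ext) (auto simp: Hm_carrier sgc_def ek_def)

definition isu :: "int \<times> int \<Rightarrow> bool" where "isu r \<longleftrightarrow> \<not> P dvd fst r"

lemma prime_P: "Factorial_Ring.prime P" using pp by simp

lemma isu_inv: "isu r \<Longrightarrow> \<exists>r'. rm r r' \<doteq> (1, 0)"
proof -
  assume u: "isu r"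
  obtain a b where r: "r = (a, b)" by (cases r)
  define N where "N = a * a - P * (b * b)"
  have "\<not> P dvd N"
  proof
    assume "P dvd N"
    moreover have "P dvd P * (b * b)" by simp
    ultimately have "P dvd a * a" unfolding N_def by (metis dvd_add_left_iff diff_add_cancel)
    then have "P dvd a" using prime_P by (meson prime_dvd_multD)
    then show False using u r by (simp add: isu_def)
  qed
  then have "coprime N P" using prime_imp_coprime[OF prime_P] coprime_commute by blast
  then have "coprime N (P^2)" by simp
  then obtain y where y: "[N * y = 1] (mod P^2)" using cong_solve_coprime_int by blast
  have "rm r (a * y, - b * y) \<doteq> (1, 0)"
    unfolding req_iff
  proof
    show "[fst (rm r (a * y, - b * y)) = fst (1::int, 0::int)] (mod P\<^sup>2)"
      using y by (simp add: r rm_def N_def algebra_simps)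
    show "[snd (rm r (a * y, - b * y)) = snd (1::int, 0::int)] (mod P)"
      by (simp add: r rm_def algebra_simps)
  qed
  then show ?thesis by blast
qed

lemma isu_sgc: "isu (sgc s r) = isu r" by (simp add: isu_def sgc_def sg_def)

lemma TT_auto: "isu r \<Longrightarrow> TT s r \<in> auto Hm"
proof -
  assume u: "isu r"
  obtain r' where r': "rm (sgc s r) r' \<doteq> (1, 0)" using isu_inv[of "sgc s r"] u isu_sgc by blast
  define r'' where "r'' = r'"
  have inv1: "rm r (sgc s r'') \<doteq> (1, 0)"
  proof -
    have "rm r (sgc s r'') = sgc s (rm (sgc s r) r')" by (simp add: r''_def sgc_rm sgc_sgc)
    also have "\<dots> \<doteq> sgc s (1, 0)" by (rule sgc_cong[OF r'])
    finally show ?thesis by simp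
  qed
  have inv2: "rm r'' (sgc s r) \<doteq> (1, 0)" using r' by (simp add: r''_def rm_comm)
  have c1: "\<And>z. z \<in> carrier Hm \<Longrightarrow> TT s r (TT s r'' z) = z"
    by (simp add: TT_comp TT_cong[OF inv1] TT_id)
  have c2: "\<And>z. z \<in> carrier Hm \<Longrightarrow> TT s r'' (TT s r z) = z"
    by (simp add: TT_comp TT_cong[OF inv2] TT_id)
  have b: "bij_betw (TT s r) (carrier Hm) (carrier Hm)"
    by (rule bij_betw_byWitness[where f' = "TT s r''"]) (auto simp: c1 c2 TT_in)
  have e: "TT s r \<in> extensional (carrier Hm)" by (simp add: TT_def)
  show ?thesis unfolding auto_def Bij_def using b e TT_hom by blast
qed

end

context g7
begin

lemma req_wit: "x \<doteq> y \<Longrightarrow> \<exists>qa qb. fst x = fst y + P^2 * qa \<and> snd x = snd y + P * qb"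
  unfolding req_iff cong_iff_lin by (metis cong_iff_lin cong_sym)

lemma key1:
  assumes i: "ra w v \<doteq> rm (Eu kc) v" and ii: "rm (Eu k1) w \<doteq> w"
  shows "P dvd int k1 * int kc * fst v"
proof -
  obtain \<alpha> \<beta> where v: "v = (\<alpha>, \<beta>)" by (cases v)
  obtain \<omega>1 \<omega>2 where w: "w = (\<omega>1, \<omega>2)" by (cases w)
  define A where "A = int kc * hh + int (kc choose 2)"
  define B where "B = int k1 * hh + int (k1 choose 2)"
  obtain q1 q2 where i1: "\<omega>1 + \<alpha> = (1 + P * A) * \<alpha> + P * (int kc * \<beta>) + P^2 * q1"
    and i2: "\<omega>2 + \<beta> = (1 + P * A) * \<beta> + int kc * \<alpha> + P * q2"
    using req_wit[OF i] by (auto simp: v w ra_def rm_def Eu_def A_def)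
  obtain q3 q4 where ii1: "(1 + P * B) * \<omega>1 + P * (int k1 * \<omega>2) = \<omega>1 + P^2 * q3"
    using req_wit[OF ii] by (auto simp: w rm_def Eu_def B_def)
  have P0: "P \<noteq> 0" using P_gt by simp
  have "P * (B * \<omega>1 + int k1 * \<omega>2) = P * (P * q3)"
    using ii1 by (simp add: algebra_simps power2_eq_square)
  then have h: "B * \<omega>1 + int k1 * \<omega>2 = P * q3" using P0 by simp
  have o1: "\<omega>1 = P * (A * \<alpha> + int kc * \<beta> + P * q1)" using i1 by (simp add: algebra_simps power2_eq_square)
  have o2: "\<omega>2 = P * (A * \<beta> + q2) + int kc * \<alpha>" using i2 by (simp add: algebra_simps)
  have "int k1 * int kc * \<alpha> = P * (q3 - B * (A * \<alpha> + int kc * \<beta> + P * q1) - int k1 * (A * \<beta> + q2))"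
    using h unfolding o1 o2 by (simp add: algebra_simps)
  then show ?thesis by (simp add: v)
qed

lemma key2:
  assumes i: "ra w v \<doteq> rm (Eu kc) v" and iii: "rm (Eu kc) w \<doteq> ra (rsc p v) w"
  shows "P dvd (int kc * int kc - 1) * fst v"
proof -
  obtain \<alpha> \<beta> where v: "v = (\<alpha>, \<beta>)" by (cases v)
  obtain \<omega>1 \<omega>2 where w: "w = (\<omega>1, \<omega>2)" by (cases w)
  define A where "A = int kc * hh + int (kc choose 2)"
  obtain q1 q2 where i1: "\<omega>1 + \<alpha> = (1 + P * A) * \<alpha> + P * (int kc * \<beta>) + P^2 * q1"
    and i2: "\<omega>2 + \<beta> = (1 + P * A) * \<beta> + int kc * \<alpha> + P * q2"
    using req_wit[OF i] by (auto simp: v w ra_def rm_def Eu_def A_def)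
  obtain q3 where ii1: "(1 + P * A) * \<omega>1 + P * (int kc * \<omega>2) = P * \<alpha> + \<omega>1 + P^2 * q3"
    using req_wit[OF iii] by (auto simp: v w ra_def rm_def Eu_def A_def rsc_def)
  have P0: "P \<noteq> 0" using P_gt by simp
  have "P * (A * \<omega>1 + int kc * \<omega>2) = P * (\<alpha> + P * q3)"
    using ii1 by (simp add: algebra_simps power2_eq_square)
  then have h: "A * \<omega>1 + int kc * \<omega>2 = \<alpha> + P * q3" using P0 by simp
  have o1: "\<omega>1 = P * (A * \<alpha> + int kc * \<beta> + P * q1)" using i1 by (simp add: algebra_simps power2_eq_square)
  have o2: "\<omega>2 = P * (A * \<beta> + q2) + int kc * \<alpha>" using i2 by (simp add: algebra_simps)
  have "(int kc * int kc - 1) * \<alpha> = P * (q3 - A * (A * \<alpha> + int kc * \<beta> + P * q1) - int kc * (A * \<beta> + q2))"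
    using h unfolding o1 o2 by (simp add: algebra_simps)
  then show ?thesis by (simp add: v)
qed


lemma r1: "cc \<otimes>\<^bsub>Hm\<^esub> dd = dd \<otimes>\<^bsub>Hm\<^esub> bb \<otimes>\<^bsub>Hm\<^esub> cc"
  using p_pos by (simp add: cc_def dd_def bb_def Hm_mult ra_def uu_def add.commute)

lemma r3: "bb \<otimes>\<^bsub>Hm\<^esub> dd = dd \<otimes>\<^bsub>Hm\<^esub> bb"
  by (simp add: dd_def bb_def Hm_mult ra_def add.commute)

lemma dd_pow: "dd [^]\<^bsub>Hm\<^esub> p = aa [^]\<^bsub>Hm\<^esub> p"
proof -
  have "P mod P^2 = P" using P_gt by (simp add: power2_eq_square)
  then show ?thesis unfolding aa_pow_p dd_def using nr_1
    by (subst Hm_pow_M) (simp_all add: rsc_def nr_def)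
qed

lemma r2: "cc \<otimes>\<^bsub>Hm\<^esub> bb = dd [^]\<^bsub>Hm\<^esub> p \<otimes>\<^bsub>Hm\<^esub> bb \<otimes>\<^bsub>Hm\<^esub> cc"
  unfolding dd_pow by (rule rel_cb)

definition nfm :: "int \<Rightarrow> int \<Rightarrow> nat" where "nfm \<alpha> \<beta> = nat ((\<alpha> - \<beta> * (P * hh)) mod P^2)"

lemma nf_eq: "0 \<le> \<beta> \<Longrightarrow> ra (rsc (nfm \<alpha> \<beta>) (1, 0)) (rsc (nat \<beta>) (P * hh, 1)) \<doteq> (\<alpha>, \<beta>)"
proof -
  assume b0: "0 \<le> \<beta>"
  have m: "int (nfm \<alpha> \<beta>) = (\<alpha> - \<beta> * (P * hh)) mod P^2" unfolding nfm_def using P_gt by simp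
  have n: "int (nat \<beta>) = \<beta>" using b0 by simp
  show ?thesis unfolding req_iff
  proof
    show "[fst (ra (rsc (nfm \<alpha> \<beta>) (1, 0)) (rsc (nat \<beta>) (P * hh, 1))) = fst (\<alpha>, \<beta>)] (mod P\<^sup>2)"
      using b0 by (simp add: ra_def rsc_def m n cong_def mod_add_left_eq)
    show "[snd (ra (rsc (nfm \<alpha> \<beta>) (1, 0)) (rsc (nat \<beta>) (P * hh, 1))) = snd (\<alpha>, \<beta>)] (mod P)"
      using b0 by (simp add: ra_def rsc_def n)
  qed
qed

lemma normal_form:
  assumes z: "((\<alpha>, \<beta>), k) \<in> carrier Hm"
  shows "((\<alpha>, \<beta>), k) = dd [^]\<^bsub>Hm\<^esub> (nfm \<alpha> \<beta>) \<otimes>\<^bsub>Hm\<^esub> bb [^]\<^bsub>Hm\<^esub> (nat \<beta>) \<otimes>\<^bsub>Hm\<^esub> cc [^]\<^bsub>Hm\<^esub> k"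
proof -
  have zc: "nr (\<alpha>, \<beta>) = (\<alpha>, \<beta>)" "k < p" using z by (auto simp: Hm_carrier)
  then have b0: "0 \<le> \<beta>" by (simp add: nr_id_iff)
  have "nr (ra (nr (rsc (nfm \<alpha> \<beta>) (1, 0))) (rm (1, 0) (nr (rsc (nat \<beta>) (P * hh, 1))))) = nr (\<alpha>, \<beta>)"
  proof (rule nr_eqI)
    have "ra (nr (rsc (nfm \<alpha> \<beta>) (1, 0))) (rm (1, 0) (nr (rsc (nat \<beta>) (P * hh, 1)))) \<doteq>
          ra (rsc (nfm \<alpha> \<beta>) (1, 0)) (rsc (nat \<beta>) (P * hh, 1))"
      by (simp, intro ra_cong nr_req)
    also have "\<dots> \<doteq> (\<alpha>, \<beta>)" by (rule nf_eq[OF b0])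
    finally show "ra (nr (rsc (nfm \<alpha> \<beta>) (1, 0))) (rm (1, 0) (nr (rsc (nat \<beta>) (P * hh, 1)))) \<doteq> (\<alpha>, \<beta>)" .
  qed
  then show ?thesis
    unfolding dd_def bb_def cc_pow
    using zc by (simp add: Hm_pow_M nr_1 nr_bb Hm_mult)
qed

lemma normal_form': "z \<in> carrier Hm \<Longrightarrow> \<exists>m n k. z = dd [^]\<^bsub>Hm\<^esub> (m::nat) \<otimes>\<^bsub>Hm\<^esub> bb [^]\<^bsub>Hm\<^esub> (n::nat) \<otimes>\<^bsub>Hm\<^esub> cc [^]\<^bsub>Hm\<^esub> (k::nat)"
  by (metis normal_form prod.collapse)

definition Wset where "Wset = {z \<in> carrier Hm. P dvd fst (fst z)}"

lemma P_dvd_P2: "P dvd P^2" by (simp add: power2_eq_square)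

lemma W_mult: "z1 \<in> Wset \<Longrightarrow> z2 \<in> Wset \<Longrightarrow> z1 \<otimes>\<^bsub>Hm\<^esub> z2 \<in> Wset"
proof -
  interpret group Hm by (rule group_Hm)
  assume a: "z1 \<in> Wset" "z2 \<in> Wset"
  obtain x k where z1: "z1 = (x, k)" by (cases z1)
  obtain y l where z2: "z2 = (y, l)" by (cases z2)
  have "P dvd fst x" "P dvd fst y" using a by (auto simp: Wset_def z1 z2)
  then have "P dvd fst (ra x (rm (rp uu k) y))" by (simp add: ra_def rm_def)
  then have "P dvd fst (ra x (rm (rp uu k) y)) mod P^2"
    using P_dvd_P2 by (simp add: dvd_mod)
  moreover have "z1 \<otimes>\<^bsub>Hm\<^esub> z2 \<in> carrier Hm" using a by (simp add: Wset_def)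
  ultimately show ?thesis by (simp add: Wset_def z1 z2 Hm_mult nr_def)
qed

lemma W_one: "\<one>\<^bsub>Hm\<^esub> \<in> Wset" using p_pos by (simp add: Wset_def Hm_one Hm_carrier)

lemma W_pow: "z \<in> Wset \<Longrightarrow> z [^]\<^bsub>Hm\<^esub> (n::nat) \<in> Wset"
  by (induction n) (simp_all add: W_one W_mult)

lemma dd_notW: "dd \<notin> Wset"
  using P_gt by (simp add: Wset_def dd_def)

lemma cc_ne_one: "cc \<noteq> \<one>\<^bsub>Hm\<^esub>" by (simp add: cc_def Hm_one)

lemma Eu_cong: "rm (rp uu k) x \<doteq> rm (Eu k) x" by (intro rm_cong rp_uu req_refl)

end

context g7
begin

abbreviation "Kc \<equiv> generate Hm {cc}"

lemma K_eq: "Kc = {((0::int, 0::int), k) | k. k < p}"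
proof
  interpret group Hm by (rule group_Hm)
  show "{((0::int, 0::int), k) | k. k < p} \<subseteq> Kc"
  proof
    fix z assume "z \<in> {((0::int, 0::int), k) | k. k < p}"
    then obtain k where z: "z = ((0, 0), k)" "k < p" by blast
    have "cc [^]\<^bsub>Hm\<^esub> k \<in> Kc" by (intro gen_pow generate.incl) simp
    then show "z \<in> Kc" using z by (simp add: cc_pow)
  qed
  show "Kc \<subseteq> {((0::int, 0::int), k) | k. k < p}"
  proof
    fix z assume "z \<in> Kc"
    then show "z \<in> {((0::int, 0::int), k) | k. k < p}"
    proof (induction rule: generate.induct)
      case one then show ?case using p_pos by (simp add: Hm_one)
    next
      case (incl h) then show ?case using p5 by (simp add: cc_def)
    next
      case (inv h)
      then have h: "h = cc" by simp
      have "cc [^]\<^bsub>Hm\<^esub> (p - 1) \<otimes>\<^bsub>Hm\<^esub> cc = \<one>\<^bsub>Hm\<^esub>"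
      proof -
        have "cc [^]\<^bsub>Hm\<^esub> (p - 1) \<otimes>\<^bsub>Hm\<^esub> cc = cc [^]\<^bsub>Hm\<^esub> Suc (p - 1)" by simp
        also have "\<dots> = cc [^]\<^bsub>Hm\<^esub> p" using p_pos by simp
        finally show ?thesis by (simp add: cc_pow Hm_one)
      qed
      then have "inv\<^bsub>Hm\<^esub> cc = cc [^]\<^bsub>Hm\<^esub> (p - 1)"
        by (intro inv_equality) (simp_all add: in_Hm)
      then show ?case using h p_pos by (simp add: cc_pow)
    next
      case (eng h1 h2)
      then show ?case using p_pos by (auto simp: Hm_mult)
    qed
  qed
qed

lemma mod_cancel: "(x::nat) mod p = (x + c) mod p \<Longrightarrow> c < p \<Longrightarrow> c = 0"
proof -
  assume a: "x mod p = (x + c) mod p" and c: "c < p"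
  have "[x + 0 = x + c] (mod p)" using a by (simp add: cong_def)
  then have "[0 = c] (mod p)" using cong_add_lcancel_nat by blast
  then show "c = 0" using c by (simp add: cong_def)
qed

lemma small_dvd: "P dvd x \<Longrightarrow> 0 \<le> x \<Longrightarrow> x < P \<Longrightarrow> x = 0"
  by (metis order_le_less zdvd_not_zless)

lemma W_from_i: "ra w v \<doteq> rm (Eu kc) v \<Longrightarrow> P dvd fst w"
proof -
  assume i: "ra w v \<doteq> rm (Eu kc) v"
  obtain qa qb where "fst (ra w v) = fst (rm (Eu kc) v) + P^2 * qa" using req_wit[OF i] by blast
  then have "fst w = P * ((int kc * hh + int (kc choose 2)) * fst v + int kc * snd v + P * qa)"
    by (simp add: ra_def rm_def Eu_def algebra_simps power2_eq_square)
  then show ?thesis by simp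
qed

lemma ra_cancel: "ra v x \<doteq> ra v y \<Longrightarrow> x \<doteq> y"
proof -
  assume a: "ra v x \<doteq> ra v y"
  have "x = ra (rn v) (ra v x)" by (simp add: ra_def rn_def)
  also have "\<dots> \<doteq> ra (rn v) (ra v y)" by (intro ra_cong req_refl a)
  also have "ra (rn v) (ra v y) = y" by (simp add: ra_def rn_def)
  finally show ?thesis .
qed

lemma autK_char:
  assumes th: "\<theta> \<in> auto Hm" and thK: "\<theta> ` Kc = Kc"
  shows "\<exists>s v. nr v = v \<and> isu v \<and> \<theta> = TT s v"
proof -
  interpret group Hm by (rule group_Hm)
  have hom: "\<theta> \<in> hom Hm Hm" and bij: "bij_betw \<theta> (carrier Hm) (carrier Hm)"
    and ext: "\<theta> \<in> extensional (carrier Hm)"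
    using th by (auto simp: auto_def Bij_def)
  have inj: "inj_on \<theta> (carrier Hm)" and surj: "\<theta> ` carrier Hm = carrier Hm"
    using bij by (auto simp: bij_betw_def)
  have thc: "\<And>z. z \<in> carrier Hm \<Longrightarrow> \<theta> z \<in> carrier Hm" using hom by (auto simp: hom_def)
  have thmul: "\<And>x y. x \<in> carrier Hm \<Longrightarrow> y \<in> carrier Hm \<Longrightarrow> \<theta> (x \<otimes>\<^bsub>Hm\<^esub> y) = \<theta> x \<otimes>\<^bsub>Hm\<^esub> \<theta> y"
    using hom by (auto simp: hom_def)
  have thp: "\<And>x n. x \<in> carrier Hm \<Longrightarrow> \<theta> (x [^]\<^bsub>Hm\<^esub> (n::nat)) = \<theta> x [^]\<^bsub>Hm\<^esub> n"
    using hom_nat_pow[OF hom] group_Hm by blast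
  have th1: "\<theta> \<one>\<^bsub>Hm\<^esub> = \<one>\<^bsub>Hm\<^esub>" using hom_one[OF hom] group_Hm by (simp add: group.is_monoid)
  have "\<theta> cc \<in> Kc" using thK by (blast intro: generate.incl)
  then obtain kc where thcc: "\<theta> cc = ((0, 0), kc)" and kcp: "kc < p" unfolding K_eq by blast
  have kc0: "kc \<noteq> 0"
  proof
    assume "kc = 0"
    then have "\<theta> cc = \<theta> \<one>\<^bsub>Hm\<^esub>" using thcc th1 by (simp add: Hm_one)
    then have "cc = \<one>\<^bsub>Hm\<^esub>" using inj in_Hm by (auto dest: inj_onD)
    then show False using cc_ne_one by simp
  qed
  obtain v k1 where thd: "\<theta> dd = (v, k1)" by (cases "\<theta> dd")
  have vc: "nr v = v" "k1 < p" using thc[OF in_Hm(1)] by (auto simp: thd Hm_carrier)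
  obtain w k2 where thb: "\<theta> bb = (w, k2)" by (cases "\<theta> bb")
  have wc: "nr w = w" "k2 < p" using thc[OF in_Hm(2)] by (auto simp: thb Hm_carrier)
  have h1: "\<theta> cc \<otimes>\<^bsub>Hm\<^esub> \<theta> dd = \<theta> dd \<otimes>\<^bsub>Hm\<^esub> \<theta> bb \<otimes>\<^bsub>Hm\<^esub> \<theta> cc"
    using r1 thmul in_Hm by (metis m_closed)
  then have E1: "nr (rm (rp uu kc) v) = nr (ra v (rm (rp uu k1) w))"
    and E1k: "(kc + k1) mod p = ((k1 + k2) mod p + kc) mod p"
    by (simp_all add: thcc thd thb Hm_mult)
  have k20: "k2 = 0"
  proof -
    have "((k1 + k2) mod p + kc) mod p = (k1 + k2 + kc) mod p" by (rule mod_add_left_eq)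
    then have "(kc + k1) mod p = (kc + k1 + k2) mod p" using E1k by (simp add: ac_simps)
    then show ?thesis using wc(2) by (rule mod_cancel)
  qed
  have h3: "\<theta> bb \<otimes>\<^bsub>Hm\<^esub> \<theta> dd = \<theta> dd \<otimes>\<^bsub>Hm\<^esub> \<theta> bb"
    using r3 thmul in_Hm by metis
  then have E3: "nr (ra w v) = nr (ra v (rm (rp uu k1) w))"
    by (simp add: thd thb k20 Hm_mult)
  have i: "ra w v \<doteq> rm (rp uu kc) v" using E1 E3 by (simp add: req_def)
  have ii: "rm (rp uu k1) w \<doteq> w"
  proof -
    have "ra v (rm (rp uu k1) w) \<doteq> ra v w" using E3 by (simp add: req_def ra_comm)
    then show ?thesis by (rule ra_cancel)
  qed
  have i': "ra w v \<doteq> rm (Eu kc) v" using i Eu_cong req_trans by blast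
  have ii': "rm (Eu k1) w \<doteq> w" using ii Eu_cong req_trans req_sym by blast
  have uv: "isu v"
  proof (rule ccontr)
    assume "\<not> isu v"
    then have dW: "\<theta> dd \<in> Wset" using thc[OF in_Hm(1)] by (simp add: isu_def Wset_def thd)
    have bW: "\<theta> bb \<in> Wset" using thc[OF in_Hm(2)] W_from_i[OF i'] by (simp add: Wset_def thb)
    have cW: "\<theta> cc \<in> Wset" using thc[OF in_Hm(3)] by (simp add: Wset_def thcc)
    obtain z where z: "z \<in> carrier Hm" "\<theta> z = dd" using surj in_Hm(1) by (metis imageE)
    obtain m n k :: nat where zz: "z = dd [^]\<^bsub>Hm\<^esub> m \<otimes>\<^bsub>Hm\<^esub> bb [^]\<^bsub>Hm\<^esub> n \<otimes>\<^bsub>Hm\<^esub> cc [^]\<^bsub>Hm\<^esub> k"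
      using normal_form'[OF z(1)] by blast
    have "\<theta> z = \<theta> dd [^]\<^bsub>Hm\<^esub> m \<otimes>\<^bsub>Hm\<^esub> \<theta> bb [^]\<^bsub>Hm\<^esub> n \<otimes>\<^bsub>Hm\<^esub> \<theta> cc [^]\<^bsub>Hm\<^esub> k"
      unfolding zz using in_Hm by (simp add: thmul thp)
    also have "\<dots> \<in> Wset" using dW bW cW by (intro W_mult W_pow)
    finally show False using z dd_notW by simp
  qed
  have k10: "k1 = 0"
  proof -
    have "P dvd int k1 * int kc * fst v" by (rule key1[OF i' ii'])
    moreover have "\<not> P dvd fst v" using uv by (simp add: isu_def)
    moreover have "\<not> P dvd int kc" using kc0 kcp by (metis small_dvd of_nat_0_le_iff of_nat_eq_0_iff of_nat_less_iff)
    ultimately have "P dvd int k1" using prime_P by (metis prime_dvd_mult_iff)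
    then show ?thesis using vc(2) small_dvd by (metis of_nat_0_le_iff of_nat_eq_0_iff of_nat_less_iff)
  qed
  have h2: "\<theta> cc \<otimes>\<^bsub>Hm\<^esub> \<theta> bb = \<theta> dd [^]\<^bsub>Hm\<^esub> p \<otimes>\<^bsub>Hm\<^esub> \<theta> bb \<otimes>\<^bsub>Hm\<^esub> \<theta> cc"
    using r2 thmul thp in_Hm by (metis m_closed nat_pow_closed)
  have dp: "\<theta> dd [^]\<^bsub>Hm\<^esub> p = (nr (rsc p v), 0)" using vc(1) by (simp add: thd k10 Hm_pow_M)
  have E2: "nr (rm (rp uu kc) w) = nr (ra (nr (rsc p v)) w)"
    using h2 unfolding dp by (simp add: thcc thb k20 Hm_mult)
  have iii: "rm (Eu kc) w \<doteq> ra (rsc p v) w"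
  proof -
    have "rm (Eu kc) w \<doteq> rm (rp uu kc) w" by (rule req_sym[OF Eu_cong])
    also have "\<dots> \<doteq> ra (nr (rsc p v)) w" using E2 by (simp add: req_def)
    also have "\<dots> \<doteq> ra (rsc p v) w" by (intro ra_cong nr_req req_refl)
    finally show ?thesis .
  qed
  have kcs: "kc = 1 \<or> kc = p - 1"
  proof -
    have "P dvd (int kc * int kc - 1) * fst v" by (rule key2[OF i' iii])
    then have "P dvd int kc * int kc - 1" using uv prime_P
      by (metis isu_def prime_dvd_mult_iff)
    then have "P dvd (int kc - 1) * (int kc + 1)" by (simp add: algebra_simps)
    then have "P dvd int kc - 1 \<or> P dvd int kc + 1" using prime_P by (simp add: prime_dvd_mult_iff)
    then show ?thesis
    proof
      assume "P dvd int kc - 1"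
      then have "int kc - 1 = 0" using kc0 kcp by (intro small_dvd) auto
      then show ?thesis by simp
    next
      assume a: "P dvd int kc + 1"
      have "int kc + 1 = P"
      proof (rule ccontr)
        assume "int kc + 1 \<noteq> P"
        then have "int kc + 1 < P" using kcp by simp
        then have "int kc + 1 = 0" using a by (intro small_dvd) auto
        then show False by simp
      qed
      then have "kc + 1 = p" by linarith
      then have "kc = p - 1" by linarith
      then show ?thesis by blast
    qed
  qed
  define s where "s = (kc \<noteq> 1)"
  have kcs': "kc = (if s then p - 1 else 1)" using kcs by (auto simp: s_def)
  have Um1: "ra (rp uu kc) (rn (1, 0)) \<doteq> sgc s (P * hh, 1)"
  proof (cases s)
    case True
    then have "kc = p - 1" using kcs' by simp
    then have u: "rp uu kc \<doteq> sg uu" using uu_pm1 by simp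
    have "ra (rp uu kc) (rn (1, 0)) \<doteq> ra (sg uu) (rn (1, 0))"
      by (intro ra_cong u req_refl)
    also have "ra (sg uu) (rn (1, 0)) = sgc s (P * hh, 1)"
      using True by (simp add: sg_def uu_def ra_def rn_def sgc_def)
    finally show ?thesis .
  next
    case False
    then have "kc = 1" using kcs' by simp
    then show ?thesis using False by (simp add: uu_def ra_def rn_def sgc_def)
  qed
  have wv: "w \<doteq> rm (sgc s (P * hh, 1)) v"
  proof -
    have "w = ra (ra w v) (rn v)" by (simp add: ra_def rn_def)
    also have "\<dots> \<doteq> ra (rm (rp uu kc) v) (rn v)" by (intro ra_cong i req_refl)
    also have "ra (rm (rp uu kc) v) (rn v) = rm (ra (rp uu kc) (rn (1, 0))) v"
      by (simp add: ra_def rn_def rm_def algebra_simps)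
    also have "\<dots> \<doteq> rm (sgc s (P * hh, 1)) v" by (intro rm_cong Um1 req_refl)
    finally show ?thesis .
  qed
  have "\<forall>z \<in> carrier Hm. \<theta> z = TT s v z"
  proof
    fix z assume z: "z \<in> carrier Hm"
    obtain \<alpha> \<beta> k where zz: "z = ((\<alpha>, \<beta>), k)" by (metis prod.collapse)
    have zc: "nr (\<alpha>, \<beta>) = (\<alpha>, \<beta>)" "k < p" using z by (auto simp: zz Hm_carrier)
    then have b0: "0 \<le> \<beta>" by (simp add: nr_id_iff)
    define m where "m = nfm \<alpha> \<beta>"
    define n where "n = nat \<beta>"
    have "\<theta> z = \<theta> dd [^]\<^bsub>Hm\<^esub> m \<otimes>\<^bsub>Hm\<^esub> \<theta> bb [^]\<^bsub>Hm\<^esub> n \<otimes>\<^bsub>Hm\<^esub> \<theta> cc [^]\<^bsub>Hm\<^esub> k"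
      using normal_form[OF z[unfolded zz]] in_Hm by (simp add: zz m_def n_def thmul thp)
    also have "\<dots> = (nr (ra (nr (rsc m v)) (nr (rsc n w))), (k * kc) mod p)"
    proof -
      have cp: "((0, 0), kc) [^]\<^bsub>Hm\<^esub> k = ((0, 0), (k * kc) mod p)"
        using Hm_pow_gen[of "(0,0)" kc k] kcp by (simp add: Hm_carrier)
      show ?thesis unfolding thd thb thcc k10 k20 cp
        using vc wc by (simp add: Hm_pow_M Hm_mult)
    qed
    also have "\<dots> = TT s v z"
    proof -
      have "nr (ra (nr (rsc m v)) (nr (rsc n w))) = nr (rm v (sgc s (\<alpha>, \<beta>)))"
      proof (rule nr_eqI)
        have "ra (nr (rsc m v)) (nr (rsc n w)) \<doteq> ra (rsc m v) (rsc n (rm (sgc s (P * hh, 1)) v))"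
          by (intro ra_cong rsc_cong req_trans[OF nr_req] wv nr_req)
        also have "ra (rsc m v) (rsc n (rm (sgc s (P * hh, 1)) v)) =
                   rm v (sgc s (ra (rsc m (1, 0)) (rsc n (P * hh, 1))))"
          by (cases s) (simp_all add: ra_def rsc_def rm_def sgc_def sg_def algebra_simps)
        also have "\<dots> \<doteq> rm v (sgc s (\<alpha>, \<beta>))"
          unfolding m_def n_def by (intro rm_cong req_refl sgc_cong nf_eq b0)
        finally show "ra (nr (rsc m v)) (nr (rsc n w)) \<doteq> rm v (sgc s (\<alpha>, \<beta>))" .
      qed
      moreover have "(k * kc) mod p = ek s k" using zc(2) kcs' by (simp add: ek_def)
      ultimately show ?thesis using z by (simp add: TT_def zz)
    qed
    finally show "\<theta> z = TT s v z" .
  qed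
  then have "\<theta> = TT s v"
    using ext by (intro extensionalityI[of _ "carrier Hm"]) (auto simp: TT_def)
  then show ?thesis using vc(1) uv by blast
qed

end

context g7
begin

definition g0 :: nat where "g0 = (SOME g. residue_primroot (p^2) g)"

lemma g0_prim: "residue_primroot (p^2) g0"
proof -
  obtain g where "\<forall>k>0. residue_primroot (p ^ k) g"
    using residue_primroot_odd_prime_power_exists[of p] pp p_odd by blast
  then have "residue_primroot (p^2) g" by simp
  then show ?thesis unfolding g0_def by (rule someI)
qed

lemma totient_p2: "totient (p^2) = p * (p - 1)"
  using totient_prime_power[of p 2] pp by simp

lemma g0_coprime: "coprime (p^2) g0" using g0_prim by (simp add: residue_primroot_def)

lemma g0_ord: "ord (p^2) g0 = p * (p - 1)" using g0_prim totient_p2 by (simp add: residue_primroot_def)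

abbreviation "G \<equiv> int g0"
abbreviation "NN \<equiv> p * (p - 1)"

lemma G_not_dvd: "\<not> P dvd G ^ n"
proof
  assume "P dvd G ^ n"
  then have "P dvd G" using prime_P prime_dvd_power by blast
  then have "p dvd g0" by (simp add: int_dvd_int_iff)
  moreover have "coprime p g0" using g0_coprime by simp
  ultimately have "is_unit p" using coprime_common_divisor[of p g0 p] by simp
  then show False using pp by (simp add: not_prime_unit)
qed

lemma rp_G: "rp (G, 0) n = (G ^ n, 0)"
  by (induction n) (simp_all add: rm_def)

lemma G_euler: "[G ^ NN = 1] (mod P^2)"
proof -
  have "[g0 ^ totient (p^2) = 1] (mod p^2)" using euler_theorem[of g0 "p^2"] g0_coprime
    by (simp add: coprime_commute)
  then have "[g0 ^ NN = 1] (mod p^2)" by (simp add: totient_p2)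
  then have "[int (g0 ^ NN) = int 1] (mod int (p^2))" by (simp only: cong_int_iff)
  then show ?thesis by simp
qed

lemma G_mod: "G ^ n mod P^2 = G ^ (n mod NN) mod P^2"
proof -
  have "G ^ n = G ^ (NN * (n div NN) + n mod NN)" by simp
  also have "\<dots> = (G ^ NN) ^ (n div NN) * G ^ (n mod NN)"
    by (simp only: power_add power_mult)
  finally have e: "G ^ n = (G ^ NN) ^ (n div NN) * G ^ (n mod NN)" .
  have "[(G ^ NN) ^ (n div NN) = 1 ^ (n div NN)] (mod P^2)"
    using G_euler by (rule cong_pow)
  then have "[(G ^ NN) ^ (n div NN) * G ^ (n mod NN) = 1 * G ^ (n mod NN)] (mod P^2)"
    by (intro cong_mult cong_refl) simp
  then show ?thesis unfolding e by (simp add: cong_def)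
qed

lemma G_inj: "z1 < NN \<Longrightarrow> z2 < NN \<Longrightarrow> [G ^ z1 = G ^ z2] (mod P^2) \<Longrightarrow> z1 = z2"
proof -
  assume z: "z1 < NN" "z2 < NN" and c: "[G ^ z1 = G ^ z2] (mod P^2)"
  have "[int (g0 ^ z1) = int (g0 ^ z2)] (mod int (p^2))" using c by simp
  then have "[g0 ^ z1 = g0 ^ z2] (mod p^2)" by (simp only: cong_int_iff)
  then have "g0 ^ z1 mod p^2 = g0 ^ z2 mod p^2" by (simp add: cong_def)
  moreover have "inj_on (\<lambda>k. g0 ^ k mod p^2) {..<ord (p^2) g0}"
    using inj_power_mod[of "p^2" g0] g0_coprime by simp
  ultimately show ?thesis using z g0_ord by (auto dest: inj_onD)
qed

lemma G_surj:
  assumes "\<not> P dvd \<gamma>"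
  shows "\<exists>z < NN. [G ^ z = \<gamma>] (mod P^2)"
proof -
  have "(5::int) * 5 \<le> P * P" using P_gt by (intro mult_mono) auto
  then have P2: "(1::int) < P^2" by (simp add: power2_eq_square)
  define c where "c = nat (\<gamma> mod P^2)"
  have P20: "0 < P^2" using P2 by linarith
  have "0 \<le> \<gamma> mod P^2" by (rule pos_mod_sign[OF P20])
  then have c_int: "int c = \<gamma> mod P^2" unfolding c_def by simp
  have "\<not> P dvd \<gamma> mod P^2"
    using assms by (metis P_dvd_P2 dvd_mod_iff)
  then have "coprime (\<gamma> mod P^2) P" using prime_P by (metis coprime_commute prime_imp_coprime)
  then have "coprime (int c) (int (p^2))" using c_int by simp
  then have cop: "coprime c (p^2)" by (simp only: coprime_int_iff)
  have "\<gamma> mod P^2 < P^2" by (rule pos_mod_bound[OF P20])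
  then have "int c < int (p^2)" using c_int by simp
  then have "c < p^2" by linarith
  moreover have "c > 0"
  proof (rule ccontr)
    assume "\<not> c > 0" then have "c = 0" by simp
    then have "P^2 dvd \<gamma>" using c_int by (simp add: mod_eq_0_iff_dvd)
    then have "P dvd \<gamma>" using P_dvd_P2 dvd_trans by blast
    then show False using assms by simp
  qed
  ultimately have "c \<in> totatives (p^2)" using cop by (simp add: totatives_def coprime_commute)
  moreover have "bij_betw (\<lambda>i. g0 ^ i mod p^2) {..<totient (p^2)} (totatives (p^2))"
  proof -
    have "1 < p" using p5 by simp
    then have "1 < p^2" using one_less_power[of p 2] by linarith
    then show ?thesis using residue_primroot_is_generator[OF _ g0_prim] by simp
  qed
  ultimately have "c \<in> (\<lambda>i. g0 ^ i mod p^2) ` {..<totient (p^2)}" by (simp add: bij_betw_def)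
  then obtain z where z: "z < NN" "g0 ^ z mod p^2 = c"
    unfolding totient_p2 by auto
  then have "int (g0 ^ z mod p^2) = \<gamma> mod P^2" using c_int by simp
  then have "G ^ z mod P^2 = \<gamma> mod P^2" by (simp add: of_nat_mod)
  then show ?thesis using z by (auto simp: cong_def)
qed

end

lemma group_dihedral: "n > 0 \<Longrightarrow> group (dihedral_group n)"
proof (rule groupI)
  assume n: "n > 0"
  show "\<one>\<^bsub>dihedral_group n\<^esub> \<in> carrier (dihedral_group n)" using n by (simp add: dihedral_group_def)
  fix x y assume "x \<in> carrier (dihedral_group n)" "y \<in> carrier (dihedral_group n)"
  then show "x \<otimes>\<^bsub>dihedral_group n\<^esub> y \<in> carrier (dihedral_group n)"
    using n by (cases x, cases y) (auto simp: dihedral_group_def)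
next
  assume n: "n > 0"
  fix x y z assume "x \<in> carrier (dihedral_group n)" "y \<in> carrier (dihedral_group n)" "z \<in> carrier (dihedral_group n)"
  then show "x \<otimes>\<^bsub>dihedral_group n\<^esub> y \<otimes>\<^bsub>dihedral_group n\<^esub> z = x \<otimes>\<^bsub>dihedral_group n\<^esub> (y \<otimes>\<^bsub>dihedral_group n\<^esub> z)"
    by (cases x, cases y, cases z) (auto simp: dihedral_group_def mod_simps algebra_simps)
next
  assume n: "n > 0"
  fix x assume "x \<in> carrier (dihedral_group n)"
  then show "\<one>\<^bsub>dihedral_group n\<^esub> \<otimes>\<^bsub>dihedral_group n\<^esub> x = x"
    by (cases x) (auto simp: dihedral_group_def)
next
  assume n: "n > 0"
  fix x assume x: "x \<in> carrier (dihedral_group n)"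
  obtain k s where xx: "x = (k, s)" by (cases x)
  define y where "y = ((if s then k else (- k) mod int n), s)"
  have "y \<in> carrier (dihedral_group n)" using n x by (auto simp: y_def xx dihedral_group_def)
  moreover have "y \<otimes>\<^bsub>dihedral_group n\<^esub> x = \<one>\<^bsub>dihedral_group n\<^esub>"
    using x by (auto simp: y_def xx dihedral_group_def mod_simps)
  ultimately show "\<exists>y\<in>carrier (dihedral_group n). y \<otimes>\<^bsub>dihedral_group n\<^esub> x = \<one>\<^bsub>dihedral_group n\<^esub>" by blast
qed

lemma AutK_carrier: "carrier (AutK G K) = {\<theta> \<in> auto G. \<theta> ` K = K}"
  by (simp add: AutK_def)

lemma AutK_mult: "\<theta>1 \<in> auto G \<Longrightarrow> \<theta>2 \<in> auto G \<Longrightarrow> \<theta>1 \<otimes>\<^bsub>AutK G K\<^esub> \<theta>2 = compose (carrier G) \<theta>1 \<theta>2"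
  by (simp add: AutK_def AutoGroup_def BijGroup_def auto_def)

context g7
begin

definition rr :: "nat \<Rightarrow> nat \<Rightarrow> int \<times> int" where "rr a c = rm (rp uu a) (G ^ c, 0)"

definition Phi :: "(int \<times> bool) \<times> int \<Rightarrow> (int \<times> int) \<times> nat \<Rightarrow> (int \<times> int) \<times> nat" where
  "Phi x = TT (snd (fst x)) (rr (nat (fst (fst x))) (nat (snd x)))"

abbreviation "DZ \<equiv> dihedral_group p \<times>\<times> integer_mod_group NN"

lemma DZ_carrier: "carrier DZ = ({0..<P} \<times> UNIV) \<times> {0..<int NN}"
  using p5 by (simp add: dihedral_group_def carrier_integer_mod_group)

lemma TT_K: "TT s r ` Kc = Kc"
proof -
  have img: "TT s r ((0, 0), k) = ((0, 0), ek s k)" if "k < p" for k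
    using that by (simp add: TT_def Hm_carrier sgc_def sg_def)
  show ?thesis
  proof
    show "TT s r ` Kc \<subseteq> Kc" unfolding K_eq using img ek_lt by auto
    show "Kc \<subseteq> TT s r ` Kc"
    proof
      fix z assume "z \<in> Kc"
      then obtain k where z: "z = ((0, 0), k)" "k < p" unfolding K_eq by blast
      have "z = TT s r ((0, 0), ek s k)" using z img[of "ek s k"] ek_lt ek_ek[of k s s] by (simp add: ek_def)
      moreover have "((0::int, 0::int), ek s k) \<in> Kc" unfolding K_eq using ek_lt z by auto
      ultimately show "z \<in> TT s r ` Kc" by blast
    qed
  qed
qed

lemma fst_rp_uu: "\<exists>t. fst (rp uu a) = 1 + P * t"
proof -
  obtain qa qb where "fst (rp uu a) = fst (Eu a) + P^2 * qa" using req_wit[OF rp_uu] by blast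
  then have "fst (rp uu a) = 1 + P * ((int a * hh + int (a choose 2)) + P * qa)"
    by (simp add: Eu_def algebra_simps power2_eq_square)
  then show ?thesis by blast
qed

lemma isu_rr: "isu (rr a c)"
  unfolding isu_def
proof
  assume "P dvd fst (rr a c)"
  obtain t where t: "fst (rp uu a) = 1 + P * t" using fst_rp_uu by blast
  have "fst (rr a c) = G ^ c + P * (t * G ^ c)" by (simp add: rr_def rm_def t algebra_simps)
  then have "P dvd G ^ c" using \<open>P dvd fst (rr a c)\<close> by (metis dvd_add_left_iff dvd_triv_left)
  then show False using G_not_dvd by blast
qed

lemma Phi_in: "Phi x \<in> carrier (AutK Hm Kc)"
  unfolding AutK_carrier Phi_def using TT_auto[OF isu_rr] TT_K by blast

lemma TT_ext: "TT s r \<in> extensional (carrier Hm)" by (simp add: TT_def)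

lemma compose_TT: "compose (carrier Hm) (TT s1 r1) (TT s2 r2) = TT (s1 \<noteq> s2) (rm r1 (sgc s1 r2))"
  by (rule extensionalityI[of _ "carrier Hm"]) (auto simp: compose_def TT_comp TT_ext)

lemma rm_lc: "rm x (rm y z) = rm y (rm x z)" by (metis rm_assoc rm_comm)

lemma G_cong: "a mod P^2 = b mod P^2 \<Longrightarrow> (a, 0) \<doteq> (b, 0)"
  by (simp add: req_def nr_def)

lemma sgc_G: "sgc s (x, 0) = (x, 0)" by (simp add: sgc_def sg_def)

lemma rr_mult:
  "rr ((a + ek s b) mod p) ((c1 + c2) mod NN) \<doteq> rm (rr a c1) (sgc s (rr b c2))"
proof -
  have "rr ((a + ek s b) mod p) ((c1 + c2) mod NN) \<doteq> rm (rp uu (a + ek s b)) (G ^ (c1 + c2), 0)"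
    unfolding rr_def by (intro rm_cong req_sym[OF rp_uu_mod] G_cong) (simp add: G_mod[of "c1 + c2"])
  also have "\<dots> = rm (rm (rp uu a) (rp uu (ek s b))) (rm (G ^ c1, 0) (G ^ c2, 0))"
    by (simp add: rp_add rm_def power_add)
  also have "\<dots> \<doteq> rm (rm (rp uu a) (sgc s (rp uu b))) (rm (G ^ c1, 0) (G ^ c2, 0))"
    by (intro rm_cong req_refl req_sym[OF sgc_uu])
  also have "\<dots> = rm (rr a c1) (sgc s (rr b c2))"
    unfolding rr_def sgc_rm sgc_G by (simp add: rm_assoc rm_comm rm_lc)
  finally show ?thesis .
qed

lemma nat_dih:
  assumes "0 \<le> j1" "j1 < P" "0 \<le> j2" "j2 < P"
  shows "nat ((j1 + (if s then - j2 else j2)) mod P) = (nat j1 + ek s (nat j2)) mod p"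
proof -
  have "int ((nat j1 + ek s (nat j2)) mod p) = (j1 + (if s then - j2 else j2)) mod P"
  proof (cases s)
    case True
    have "int ((nat j1 + ek s (nat j2)) mod p) = (j1 + (j2 * (P - 1)) mod P) mod P"
      using True assms p_pos by (simp add: ek_def of_nat_mod of_nat_diff)
    also have "\<dots> = ((j1 - j2) + P * j2) mod P" by (simp add: mod_add_right_eq algebra_simps)
    also have "\<dots> = (j1 - j2) mod P" by simp
    finally show ?thesis using True by simp
  next
    case False
    then show ?thesis using assms by (simp add: ek_def of_nat_mod)
  qed
  then show ?thesis by (metis nat_int)
qed

lemma Phi_hom: "Phi \<in> hom DZ (AutK Hm Kc)"
proof (rule homI)
  fix x assume "x \<in> carrier DZ" show "Phi x \<in> carrier (AutK Hm Kc)" by (rule Phi_in)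
next
  fix x y assume x: "x \<in> carrier DZ" and y: "y \<in> carrier DZ"
  obtain j1 s1 z1 where xx: "x = ((j1, s1), z1)" by (metis prod.collapse)
  obtain j2 s2 z2 where yy: "y = ((j2, s2), z2)" by (metis prod.collapse)
  have b: "0 \<le> j1" "j1 < P" "0 \<le> z1" "z1 < int NN" "0 \<le> j2" "j2 < P" "0 \<le> z2" "z2 < int NN"
    using x y unfolding DZ_carrier xx yy by auto
  have xy: "x \<otimes>\<^bsub>DZ\<^esub> y = (((j1 + (if s1 then - j2 else j2)) mod P, s1 \<noteq> s2), (z1 + z2) mod int NN)"
    by (simp add: xx yy dihedral_group_def)
  have "(z1 + z2) mod int NN = int ((nat z1 + nat z2) mod NN)"
    using b by (simp add: of_nat_mod)
  then have nz: "nat ((z1 + z2) mod int NN) = (nat z1 + nat z2) mod NN" by simp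
  have "Phi x \<otimes>\<^bsub>AutK Hm Kc\<^esub> Phi y = compose (carrier Hm) (Phi x) (Phi y)"
    using Phi_in[of x] Phi_in[of y] by (simp add: AutK_mult AutK_carrier)
  also have "\<dots> = TT (s1 \<noteq> s2) (rm (rr (nat j1) (nat z1)) (sgc s1 (rr (nat j2) (nat z2))))"
    by (simp add: Phi_def xx yy compose_TT)
  also have "\<dots> = TT (s1 \<noteq> s2) (rr ((nat j1 + ek s1 (nat j2)) mod p) ((nat z1 + nat z2) mod NN))"
    by (rule TT_cong[OF req_sym[OF rr_mult]])
  also have "\<dots> = Phi (x \<otimes>\<^bsub>DZ\<^esub> y)"
    by (simp only: xy Phi_def fst_conv snd_conv nat_dih[OF b(1,2,5,6)] nz)
  finally show "Phi (x \<otimes>\<^bsub>DZ\<^esub> y) = Phi x \<otimes>\<^bsub>AutK Hm Kc\<^esub> Phi y" by simp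
qed

end

context g7
begin

lemma TT_cc: "TT s r cc = ((0, 0), ek s 1)"
  using in_Hm(3) by (simp add: TT_def cc_def sgc_def sg_def)

lemma TT_dd: "TT s r dd = (nr r, 0)"
  using in_Hm(1) by (simp add: TT_def dd_def sgc_def sg_def ek_def)

lemma ek_1: "ek s 1 = 1 \<longleftrightarrow> \<not> s"
  using p5 by (cases s) (auto simp: ek_def)

lemma rr_Eu: "rr a c \<doteq> (((1 + P * (int a * hh + int (a choose 2))) * G ^ c, int a * G ^ c))"
proof -
  have "rr a c \<doteq> rm (Eu a) (G ^ c, 0)" unfolding rr_def by (rule Eu_cong)
  then show ?thesis by (simp add: rm_def Eu_def)
qed

lemma rr_inj:
  assumes a: "a1 < p" "a2 < p" and c: "c1 < NN" "c2 < NN" and e: "rr a1 c1 \<doteq> rr a2 c2"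
  shows "a1 = a2 \<and> c1 = c2"
proof -
  define A1 where "A1 = int a1 * hh + int (a1 choose 2)"
  define A2 where "A2 = int a2 * hh + int (a2 choose 2)"
  have e': "((1 + P * A1) * G ^ c1, int a1 * G ^ c1) \<doteq> ((1 + P * A2) * G ^ c2, int a2 * G ^ c2)"
    using req_trans[OF req_trans[OF req_sym[OF rr_Eu] e] rr_Eu] unfolding A1_def A2_def .
  obtain qa qb where q1: "(1 + P * A1) * G ^ c1 = (1 + P * A2) * G ^ c2 + P^2 * qa"
    and q2: "int a1 * G ^ c1 = int a2 * G ^ c2 + P * qb"
    using req_wit[OF e'] by auto
  have "G ^ c1 - G ^ c2 = P * (A2 * G ^ c2 - A1 * G ^ c1 + P * qa)"
    using q1 by (simp add: algebra_simps power2_eq_square)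
  then have d1: "P dvd G ^ c1 - G ^ c2" by simp
  then obtain t where t: "G ^ c1 - G ^ c2 = P * t" by blast
  have "(int a1 - int a2) * G ^ c1 = P * (qb - int a2 * t)"
    using q2 t by (simp add: algebra_simps)
  then have "P dvd (int a1 - int a2) * G ^ c1" by simp
  then have "P dvd int a1 - int a2" using prime_P G_not_dvd by (metis prime_dvd_mult_iff)
  then have aa: "a1 = a2"
  proof -
    assume d: "P dvd int a1 - int a2"
    show ?thesis
    proof (rule ccontr)
      assume ne: "a1 \<noteq> a2"
      show False
      proof (cases "a1 < a2")
        case True
        then have "P dvd int a2 - int a1" using d by (metis dvd_minus_iff minus_diff_eq)
        then have "int a2 - int a1 = 0" using True a by (intro small_dvd) auto
        then show False using ne by simp
      next
        case False
        then have "int a1 - int a2 = 0" using d a by (intro small_dvd) auto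
        then show False using ne by simp
      qed
    qed
  qed
  then have "A1 = A2" by (simp add: A1_def A2_def)
  then have "(1 + P * A1) * (G ^ c1 - G ^ c2) = P^2 * qa" using q1 by (simp add: algebra_simps)
  then have "P^2 dvd (1 + P * A1) * (G ^ c1 - G ^ c2)" by (metis dvd_triv_left)
  moreover have "coprime (P^2) (1 + P * A1)"
  proof -
    have "\<not> P dvd 1 + P * A1"
    proof
      assume "P dvd 1 + P * A1"
      then have "P dvd 1" by (simp add: dvd_add_left_iff)
      then show False using P_gt by simp
    qed
    then have "coprime P (1 + P * A1)" using prime_imp_coprime[OF prime_P] by blast
    then show ?thesis by simp
  qed
  ultimately have "P^2 dvd G ^ c1 - G ^ c2" by (simp add: coprime_dvd_mult_right_iff)
  then have "[G ^ c1 = G ^ c2] (mod P^2)" by (simp add: cong_iff_dvd_diff)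
  then have "c1 = c2" using G_inj c by blast
  then show ?thesis using aa by simp
qed

lemma Phi_inj: "inj_on Phi (carrier DZ)"
proof
  fix x y assume x: "x \<in> carrier DZ" and y: "y \<in> carrier DZ" and e: "Phi x = Phi y"
  obtain j1 s1 z1 where xx: "x = ((j1, s1), z1)" by (metis prod.collapse)
  obtain j2 s2 z2 where yy: "y = ((j2, s2), z2)" by (metis prod.collapse)
  have b: "0 \<le> j1" "j1 < P" "0 \<le> z1" "z1 < int NN" "0 \<le> j2" "j2 < P" "0 \<le> z2" "z2 < int NN"
    using x y unfolding DZ_carrier xx yy by auto
  have e1: "TT s1 (rr (nat j1) (nat z1)) cc = TT s2 (rr (nat j2) (nat z2)) cc" using e by (simp add: Phi_def xx yy)
  have "ek s1 1 = ek s2 1" using e1 unfolding TT_cc by simp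
  then have ss: "s1 = s2" using ek_1 by metis
  have e2: "TT s1 (rr (nat j1) (nat z1)) dd = TT s2 (rr (nat j2) (nat z2)) dd" using e by (simp add: Phi_def xx yy)
  have "nr (rr (nat j1) (nat z1)) = nr (rr (nat j2) (nat z2))"
    using e2 unfolding TT_dd by simp
  then have "rr (nat j1) (nat z1) \<doteq> rr (nat j2) (nat z2)" by (simp add: req_def)
  moreover have "nat j1 < p" "nat j2 < p" using b by auto
  moreover have "nat z1 < NN" by (rule nat_less_iff[THEN iffD2, OF b(3) b(4)])
  moreover have "nat z2 < NN" by (rule nat_less_iff[THEN iffD2, OF b(7) b(8)])
  ultimately have "nat j1 = nat j2 \<and> nat z1 = nat z2" using rr_inj by blast
  then have "j1 = j2" "z1 = z2" using b by (metis nat_0_le)+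
  then show "x = y" using ss by (simp add: xx yy)
qed

lemma Phi_surj: "carrier (AutK Hm Kc) \<subseteq> Phi ` carrier DZ"
proof
  fix \<theta> assume "\<theta> \<in> carrier (AutK Hm Kc)"
  then have th: "\<theta> \<in> auto Hm" "\<theta> ` Kc = Kc" by (auto simp: AutK_carrier)
  obtain s v where v: "nr v = v" "isu v" "\<theta> = TT s v" using autK_char[OF th] by blast
  obtain \<alpha> \<beta> where vv: "v = (\<alpha>, \<beta>)" by (cases v)
  have na: "\<not> P dvd \<alpha>" using v(2) by (simp add: isu_def vv)
  then have "coprime \<alpha> P" using prime_P by (metis coprime_commute prime_imp_coprime)
  then obtain ai where ai: "[\<alpha> * ai = 1] (mod P)" using cong_solve_coprime_int by blast
  define j where "j = (\<beta> * ai) mod P"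
  have j0: "0 \<le> j" "j < P" using P_gt by (simp_all add: j_def)
  define a where "a = nat j"
  have ja: "int a = j" using j0 by (simp add: a_def)
  define A where "A = int a * hh + int (a choose 2)"
  define \<gamma> where "\<gamma> = \<alpha> * (1 - P * A)"
  have "\<not> P dvd \<gamma>"
  proof
    assume "P dvd \<gamma>"
    then have "P dvd \<alpha> - P * (\<alpha> * A)" by (simp add: \<gamma>_def algebra_simps)
    then have "P dvd \<alpha>" by (metis dvd_diff_right_iff dvd_triv_left diff_add_cancel dvd_add_left_iff)
    then show False using na by simp
  qed
  then obtain c where c: "c < NN" "[G ^ c = \<gamma>] (mod P^2)" using G_surj by blast
  have "rr a c \<doteq> v"
  proof -
    have "rr a c \<doteq> ((1 + P * A) * G ^ c, int a * G ^ c)" using rr_Eu[of a c] by (simp add: A_def)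
    also have "((1 + P * A) * G ^ c, int a * G ^ c) \<doteq> v"
      unfolding req_iff vv
    proof
      have "[(1 + P * A) * G ^ c = (1 + P * A) * \<gamma>] (mod P^2)" by (rule cong_scalar_left[OF c(2)])
      moreover have "(1 + P * A) * \<gamma> = \<alpha> + P^2 * (- A * A * \<alpha>)"
        by (simp add: \<gamma>_def algebra_simps power2_eq_square)
      moreover have "[\<alpha> + P^2 * (- A * A * \<alpha>) = \<alpha>] (mod P^2)" by (rule cong_wit[where q = "- A * A * \<alpha>"]) simp
      ultimately show "[fst ((1 + P * A) * G ^ c, int a * G ^ c) = fst (\<alpha>, \<beta>)] (mod P\<^sup>2)"
        by (metis cong_trans fst_conv)
    next
      have gP: "[G ^ c = \<gamma>] (mod P)" using c(2) by (rule cong_P_of_P2)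
      have "[\<gamma> = \<alpha>] (mod P)" by (rule cong_wit[where q = "- \<alpha> * A"]) (simp add: \<gamma>_def algebra_simps)
      then have "[G ^ c = \<alpha>] (mod P)" using gP cong_trans by blast
      then have "[int a * G ^ c = j * \<alpha>] (mod P)" using ja by (simp add: cong_scalar_left)
      moreover have "[j * \<alpha> = \<beta> * (\<alpha> * ai)] (mod P)"
        unfolding j_def by (simp add: cong_def mod_mult_left_eq mod_mult_right_eq algebra_simps)
      moreover have "[\<beta> * (\<alpha> * ai) = \<beta> * 1] (mod P)" by (rule cong_scalar_left[OF ai])
      ultimately show "[snd ((1 + P * A) * G ^ c, int a * G ^ c) = snd (\<alpha>, \<beta>)] (mod P)"
        by (metis cong_trans snd_conv mult_1_right)
    qed
    finally show ?thesis .
  qed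
  then have "TT s (rr a c) = TT s v" by (rule TT_cong)
  then have "\<theta> = Phi ((j, s), int c)" using v(3) by (simp add: Phi_def a_def)
  moreover have "int c < int NN" using c(1) by (simp only: of_nat_less_iff)
  then have "((j, s), int c) \<in> carrier DZ" using j0 unfolding DZ_carrier by auto
  ultimately show "\<theta> \<in> Phi ` carrier DZ" by blast
qed

lemma Phi_iso: "Phi \<in> iso DZ (AutK Hm Kc)"
proof (rule isoI)
  show "Phi \<in> hom DZ (AutK Hm Kc)" by (rule Phi_hom)
  have "Phi ` carrier DZ = carrier (AutK Hm Kc)"
    using Phi_surj Phi_in by blast
  then show "bij_betw Phi (carrier DZ) (carrier (AutK Hm Kc))"
    using Phi_inj by (simp add: bij_betw_def)
qed

lemma AutK_Hm_iso: "AutK Hm Kc \<cong> DZ"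
proof -
  have "group DZ" using p_pos by (intro DirProd_group group_dihedral group_integer_mod_group)
  then show ?thesis using Phi_iso by (metis group.iso_sym is_isoI)
qed

end

context group
begin

lemma pow_reduce: "x \<in> carrier G \<Longrightarrow> x [^] (m::nat) = \<one> \<Longrightarrow> x [^] (n::nat) = x [^] (n mod m)"
proof -
  assume x: "x \<in> carrier G" and m: "x [^] m = \<one>"
  have "x [^] (m * (n div m)) \<otimes> x [^] (n mod m) = x [^] (m * (n div m) + n mod m)"
    by (rule nat_pow_mult[OF x])
  also have "m * (n div m) + n mod m = n" by simp
  finally have e: "x [^] n = x [^] (m * (n div m)) \<otimes> x [^] (n mod m)" by simp
  have "x [^] (m * (n div m)) = (x [^] m) [^] (n div m)" using x by (simp add: nat_pow_pow)
  then show ?thesis using e x m by simp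
qed

lemma normal_form_G:
  assumes rel: "G7_relations G p a b c" and gen: "generate G {a, b, c} = carrier G" and p0: "p > 0"
  shows "carrier G \<subseteq> (\<lambda>(i, j, k). a [^] i \<otimes> b [^] j \<otimes> c [^] k) ` ({..<p^2} \<times> {..<p} \<times> {..<p})"
proof -
  have ab: "a \<in> carrier G" "b \<in> carrier G" "c \<in> carrier G"
    and ap: "a [^] (p^2) = \<one>" and bp: "b [^] p = \<one>" and cp: "c [^] p = \<one>"
    and ba: "b \<otimes> a = a [^] (1 + p) \<otimes> b"
    and ca: "c \<otimes> a = a [^] (1 + p) \<otimes> b \<otimes> c"
    and cb: "c \<otimes> b = a [^] p \<otimes> b \<otimes> c"
    using rel by (auto simp: G7_relations_def)
  define S where "S = (\<lambda>(i, j, k). a [^] i \<otimes> b [^] j \<otimes> c [^] k) ` ({..<p^2} \<times> {..<p} \<times> {..<p})"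
  define NB where "NB = {x. \<exists>(i::nat) (j::nat). x = a [^] i \<otimes> b [^] j}"
  have NBc: "x \<in> NB \<Longrightarrow> x \<in> carrier G" for x using ab by (auto simp: NB_def)
  have L1: "\<exists>u::nat. b \<otimes> a [^] i = a [^] u \<otimes> b" for i :: nat
  proof (induction i)
    case 0 then show ?case using ab by (metis l_one r_one nat_pow_0)
  next
    case (Suc i)
    then obtain u :: nat where u: "b \<otimes> a [^] i = a [^] u \<otimes> b" by blast
    have "b \<otimes> a [^] Suc i = (b \<otimes> a [^] i) \<otimes> a" using ab by (simp add: m_assoc)
    also have "\<dots> = a [^] u \<otimes> (b \<otimes> a)" using ab by (simp add: u m_assoc)
    also have "\<dots> = a [^] (u + (1 + p)) \<otimes> b" using ab by (simp add: ba m_assoc nat_pow_mult[symmetric])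
    finally show ?case by blast
  qed
  have L2: "\<exists>u::nat. b [^] j \<otimes> a = a [^] u \<otimes> b [^] j" for j :: nat
  proof (induction j)
    case 0 then show ?case using ab by (intro exI[of _ "1::nat"]) simp
  next
    case (Suc j)
    then obtain u :: nat where u: "b [^] j \<otimes> a = a [^] u \<otimes> b [^] j" by blast
    obtain u' :: nat where u': "b \<otimes> a [^] u = a [^] u' \<otimes> b" using L1 by blast
    have sj: "b [^] Suc j = b \<otimes> b [^] j" by (rule nat_pow_Suc2[OF ab(2)])
    have "b [^] Suc j \<otimes> a = b \<otimes> (b [^] j \<otimes> a)" unfolding sj using ab by (simp add: m_assoc)
    also have "\<dots> = (b \<otimes> a [^] u) \<otimes> b [^] j" using ab by (simp add: u m_assoc)
    also have "\<dots> = a [^] u' \<otimes> b [^] Suc j" unfolding sj using ab by (simp add: u' m_assoc)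
    finally show ?case by blast
  qed
  have L3a: "x \<in> NB \<Longrightarrow> x \<otimes> a \<in> NB" for x
  proof -
    assume "x \<in> NB"
    then obtain i j :: nat where x: "x = a [^] i \<otimes> b [^] j" by (auto simp: NB_def)
    obtain u :: nat where u: "b [^] j \<otimes> a = a [^] u \<otimes> b [^] j" using L2 by blast
    have "x \<otimes> a = a [^] (i + u) \<otimes> b [^] j" using ab by (simp add: x m_assoc u nat_pow_mult[symmetric])
    then show ?thesis unfolding NB_def by blast
  qed
  have L3b: "x \<in> NB \<Longrightarrow> x \<otimes> b \<in> NB" for x
  proof -
    assume "x \<in> NB"
    then obtain i j :: nat where x: "x = a [^] i \<otimes> b [^] j" by (auto simp: NB_def)
    have "x \<otimes> b = a [^] i \<otimes> b [^] Suc j" using ab by (simp add: x m_assoc)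
    then show ?thesis unfolding NB_def by blast
  qed
  have L3c: "x \<in> NB \<Longrightarrow> x \<otimes> a [^] (n::nat) \<in> NB" for x n
  proof (induction n)
    case 0 then show ?case using NBc by simp
  next
    case (Suc n)
    have "x \<otimes> a [^] Suc n = (x \<otimes> a [^] n) \<otimes> a" using ab NBc[OF Suc.prems] by (simp add: m_assoc)
    then show ?case using L3a Suc by simp
  qed
  have L3d: "x \<in> NB \<Longrightarrow> x \<otimes> b [^] (n::nat) \<in> NB" for x n
  proof (induction n)
    case 0 then show ?case using NBc by simp
  next
    case (Suc n)
    have "x \<otimes> b [^] Suc n = (x \<otimes> b [^] n) \<otimes> b" using ab NBc[OF Suc.prems] by (simp add: m_assoc)
    then show ?case using L3b Suc by simp
  qed
  have NB1: "\<one> \<in> NB" unfolding NB_def by (rule CollectI, rule exI[of _ 0], rule exI[of _ 0]) simp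
  have L4: "\<exists>Xa. Xa \<in> NB \<and> c \<otimes> a [^] i = Xa \<otimes> c" for i :: nat
  proof (induction i)
    case 0 then show ?case using ab NB1 by (intro exI[of _ \<one>]) simp_all
  next
    case (Suc i)
    then obtain Xa where Xa: "Xa \<in> NB" "c \<otimes> a [^] i = Xa \<otimes> c" by blast
    have Xac: "Xa \<in> carrier G" using NBc Xa by simp
    have "c \<otimes> a [^] Suc i = (c \<otimes> a [^] i) \<otimes> a" using ab by (simp add: m_assoc)
    also have "\<dots> = Xa \<otimes> (c \<otimes> a)" using ab Xac by (simp add: Xa m_assoc)
    also have "\<dots> = (Xa \<otimes> a [^] (1 + p) \<otimes> b) \<otimes> c" using ab Xac by (simp add: ca m_assoc)
    finally show ?case using L3b L3c Xa by blast
  qed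
  have L5: "\<exists>Ya. Ya \<in> NB \<and> c \<otimes> b [^] j = Ya \<otimes> c" for j :: nat
  proof (induction j)
    case 0 then show ?case using ab NB1 by (intro exI[of _ \<one>]) simp_all
  next
    case (Suc j)
    then obtain Ya where Ya: "Ya \<in> NB" "c \<otimes> b [^] j = Ya \<otimes> c" by blast
    have Yac: "Ya \<in> carrier G" using NBc Ya by simp
    have "c \<otimes> b [^] Suc j = (c \<otimes> b [^] j) \<otimes> b" using ab by (simp add: m_assoc)
    also have "\<dots> = Ya \<otimes> (c \<otimes> b)" using ab Yac by (simp add: Ya m_assoc)
    also have "\<dots> = (Ya \<otimes> a [^] p \<otimes> b) \<otimes> c" using ab Yac by (simp add: cb m_assoc)
    finally show ?case using L3b L3c Ya by blast
  qed
  have L6: "\<exists>(u::nat) (v::nat). c \<otimes> (a [^] i \<otimes> b [^] j) = a [^] u \<otimes> b [^] v \<otimes> c" for i j :: nat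
  proof -
    obtain Xa where Xa: "Xa \<in> NB" "c \<otimes> a [^] i = Xa \<otimes> c" using L4 by blast
    obtain Ya where Ya: "Ya \<in> NB" "c \<otimes> b [^] j = Ya \<otimes> c" using L5 by blast
    obtain u2 v2 :: nat where Ya2: "Ya = a [^] u2 \<otimes> b [^] v2" using Ya by (auto simp: NB_def)
    have Xac: "Xa \<in> carrier G" using NBc Xa by simp
    have "c \<otimes> (a [^] i \<otimes> b [^] j) = Xa \<otimes> (c \<otimes> b [^] j)" using ab Xac by (simp add: Xa(2) m_assoc[symmetric])
    also have "\<dots> = (Xa \<otimes> a [^] u2 \<otimes> b [^] v2) \<otimes> c" using ab Xac by (simp add: Ya(2) Ya2 m_assoc)
    finally have e: "c \<otimes> (a [^] i \<otimes> b [^] j) = (Xa \<otimes> a [^] u2 \<otimes> b [^] v2) \<otimes> c" .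
    have "Xa \<otimes> a [^] u2 \<otimes> b [^] v2 \<in> NB" using Xa L3c L3d by blast
    then obtain ia ja :: nat where h: "Xa \<otimes> a [^] u2 \<otimes> b [^] v2 = a [^] ia \<otimes> b [^] ja"
      unfolding NB_def by blast
    have "c \<otimes> (a [^] i \<otimes> b [^] j) = a [^] ia \<otimes> b [^] ja \<otimes> c" using e h by simp
    then show ?thesis by blast
  qed
  have Sc: "s \<in> S \<Longrightarrow> s \<in> carrier G" for s using ab by (auto simp: S_def)
  have Sform: "a [^] i \<otimes> b [^] j \<otimes> c [^] k \<in> S" for i j k :: nat
  proof -
    have "a [^] i \<otimes> b [^] j \<otimes> c [^] k = a [^] (i mod p^2) \<otimes> b [^] (j mod p) \<otimes> c [^] (k mod p)"
      using ab ap bp cp pow_reduce by metis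
    moreover have "(i mod p^2, j mod p, k mod p) \<in> {..<p^2} \<times> {..<p} \<times> {..<p}" using p0 by simp
    ultimately show ?thesis unfolding S_def by (metis (no_types, lifting) case_prod_conv image_eqI)
  qed
  define T where "T = {g \<in> carrier G. \<forall>s \<in> S. g \<otimes> s \<in> S}"
  have Tm: "g \<in> T \<Longrightarrow> h \<in> T \<Longrightarrow> g \<otimes> h \<in> T" for g h
    unfolding T_def using Sc by (auto simp: m_assoc)
  have T1: "\<one> \<in> T" unfolding T_def using Sc by auto
  have Tp: "g \<in> T \<Longrightarrow> g [^] (n::nat) \<in> T" for g n
    by (induction n) (auto simp: T1 Tm)
  have aT: "a \<in> T"
  proof -
    have "a \<otimes> s \<in> S" if "s \<in> S" for s
    proof -
      obtain i j k :: nat where s: "s = a [^] i \<otimes> b [^] j \<otimes> c [^] k" using \<open>s \<in> S\<close> by (auto simp: S_def)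
      have si: "a [^] Suc i = a \<otimes> a [^] i" by (rule nat_pow_Suc2[OF ab(1)])
      have "a \<otimes> s = a [^] Suc i \<otimes> b [^] j \<otimes> c [^] k" unfolding si using ab by (simp add: s m_assoc)
      then show ?thesis by (simp only: Sform)
    qed
    then show ?thesis using ab by (simp add: T_def)
  qed
  have bT: "b \<in> T"
  proof -
    have "b \<otimes> s \<in> S" if "s \<in> S" for s
    proof -
      obtain i j k :: nat where s: "s = a [^] i \<otimes> b [^] j \<otimes> c [^] k" using \<open>s \<in> S\<close> by (auto simp: S_def)
      obtain u :: nat where u: "b \<otimes> a [^] i = a [^] u \<otimes> b" using L1 by blast
      have sj: "b [^] Suc j = b \<otimes> b [^] j" by (rule nat_pow_Suc2[OF ab(2)])
      have "b \<otimes> s = (b \<otimes> a [^] i) \<otimes> b [^] j \<otimes> c [^] k" using ab by (simp add: s m_assoc)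
      also have "\<dots> = a [^] u \<otimes> b \<otimes> b [^] j \<otimes> c [^] k" by (simp add: u)
      also have "\<dots> = a [^] u \<otimes> b [^] Suc j \<otimes> c [^] k" unfolding sj using ab by (simp add: m_assoc)
      finally show ?thesis by (simp only: Sform)
    qed
    then show ?thesis using ab by (simp add: T_def)
  qed
  have cT: "c \<in> T"
  proof -
    have "c \<otimes> s \<in> S" if "s \<in> S" for s
    proof -
      obtain i j k :: nat where s: "s = a [^] i \<otimes> b [^] j \<otimes> c [^] k" using \<open>s \<in> S\<close> by (auto simp: S_def)
      obtain u v :: nat where uv: "c \<otimes> (a [^] i \<otimes> b [^] j) = a [^] u \<otimes> b [^] v \<otimes> c" using L6 by blast
      have "c \<otimes> s = (c \<otimes> (a [^] i \<otimes> b [^] j)) \<otimes> c [^] k" using ab by (simp add: s m_assoc)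
      also have "\<dots> = a [^] u \<otimes> b [^] v \<otimes> c [^] Suc k"
      proof -
        have sk: "c [^] Suc k = c \<otimes> c [^] k" by (rule nat_pow_Suc2[OF ab(3)])
        show ?thesis unfolding sk uv using ab by (simp add: m_assoc)
      qed
      finally show ?thesis by (simp only: Sform)
    qed
    then show ?thesis using ab by (simp add: T_def)
  qed
  have invT: "x \<in> T \<Longrightarrow> x [^] (m::nat) = \<one> \<Longrightarrow> m > 0 \<Longrightarrow> inv x \<in> T" for x m
  proof -
    assume x: "x \<in> T" and m: "x [^] m = \<one>" "m > 0"
    have xc: "x \<in> carrier G" using x by (simp add: T_def)
    have "x [^] (m - 1) \<otimes> x = \<one>" using m xc by (metis Suc_diff_1 nat_pow_Suc)
    then have "inv x = x [^] (m - 1)" using xc by (intro inv_equality) simp_all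
    then show ?thesis using Tp x by simp
  qed
  have "generate G {a, b, c} \<subseteq> T"
  proof
    fix g assume "g \<in> generate G {a, b, c}"
    then show "g \<in> T"
    proof (induction rule: generate.induct)
      case one then show ?case by (rule T1)
    next
      case (incl h) then show ?case using aT bT cT by auto
    next
      case (inv h)
      then show ?case using aT bT cT ap bp cp p0 invT by auto
    next
      case (eng h1 h2) then show ?case using Tm by blast
    qed
  qed
  moreover have "T \<subseteq> S"
  proof
    fix g assume g: "g \<in> T"
    have "\<one> \<in> S" using Sform[of 0 0 0] by simp
    then have gs: "g \<otimes> \<one> \<in> S" using g unfolding T_def by blast
    have "g \<in> carrier G" using g by (simp add: T_def)
    then show "g \<in> S" using gs by simp
  qed
  ultimately show ?thesis using gen S_def by blast
qed

lemma card_G7_le: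
  assumes "G7_relations G p a b c" and "generate G {a, b, c} = carrier G" and "p > 0"
  shows "finite (carrier G) \<and> card (carrier G) \<le> p^4"
proof -
  let ?D = "{..<p^2} \<times> {..<p} \<times> {..<p}"
  let ?f = "(\<lambda>(i, j, k). a [^] i \<otimes> b [^] j \<otimes> c [^] k)"
  have sub: "carrier G \<subseteq> ?f ` ?D" by (rule normal_form_G[OF assms])
  have "finite (?f ` ?D)" by simp
  then have fin: "finite (carrier G)" using sub finite_subset by blast
  have "card (carrier G) \<le> card (?f ` ?D)" using sub by (simp add: card_mono)
  also have "\<dots> \<le> card ?D" by (rule card_image_le) simp
  also have "card ?D = p^4" by (simp add: card_cartesian_product power_numeral_reduce)
  finally show ?thesis using fin by simp
qed

end

definition encG :: "('b::countable) monoid \<Rightarrow> nat monoid" where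
  "encG H = \<lparr>carrier = to_nat ` carrier H,
             monoid.mult = (\<lambda>x y. to_nat (from_nat x \<otimes>\<^bsub>H\<^esub> from_nat y)),
             one = to_nat \<one>\<^bsub>H\<^esub>\<rparr>"

lemma enc_hom: "group H \<Longrightarrow> to_nat \<in> hom H (encG H)"
  by (rule homI) (auto simp: encG_def)

lemma enc_iso: "group H \<Longrightarrow> to_nat \<in> iso H (encG H)"
  by (rule isoI[OF enc_hom]) (auto simp: encG_def bij_betw_def inj_on_def)

lemma enc_monoid: "group H \<Longrightarrow> monoid (encG H)"
proof -
  assume H: "group H"
  interpret group H by (rule H)
  show ?thesis
  proof (rule monoidI)
    fix x y z assume "x \<in> carrier (encG H)" "y \<in> carrier (encG H)" "z \<in> carrier (encG H)"
    then show "x \<otimes>\<^bsub>encG H\<^esub> y \<otimes>\<^bsub>encG H\<^esub> z = x \<otimes>\<^bsub>encG H\<^esub> (y \<otimes>\<^bsub>encG H\<^esub> z)"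
      by (auto simp: encG_def m_assoc)
  qed (auto simp: encG_def)
qed

lemma enc_group: "group H \<Longrightarrow> group (encG H)"
  by (metis enc_iso enc_monoid group.iso_imp_group is_isoI)

lemma G7_relations_hom:
  assumes "h \<in> hom G H" "group G" "group H" "G7_relations G p a b c"
  shows "G7_relations H p (h a) (h b) (h c)"
proof -
  interpret gh: group_hom G H h using assms by (simp add: group_hom_def group_hom_axioms_def)
  have r: "a \<in> carrier G" "b \<in> carrier G" "c \<in> carrier G"
    "a [^]\<^bsub>G\<^esub> (p^2) = \<one>\<^bsub>G\<^esub>" "b [^]\<^bsub>G\<^esub> p = \<one>\<^bsub>G\<^esub>" "c [^]\<^bsub>G\<^esub> p = \<one>\<^bsub>G\<^esub>"
    "b \<otimes>\<^bsub>G\<^esub> a = a [^]\<^bsub>G\<^esub> (1 + p) \<otimes>\<^bsub>G\<^esub> b"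
    "c \<otimes>\<^bsub>G\<^esub> a = a [^]\<^bsub>G\<^esub> (1 + p) \<otimes>\<^bsub>G\<^esub> b \<otimes>\<^bsub>G\<^esub> c"
    "c \<otimes>\<^bsub>G\<^esub> b = a [^]\<^bsub>G\<^esub> p \<otimes>\<^bsub>G\<^esub> b \<otimes>\<^bsub>G\<^esub> c"
    using assms(4) unfolding G7_relations_def by auto
  have "h (b \<otimes>\<^bsub>G\<^esub> a) = h (a [^]\<^bsub>G\<^esub> (1 + p) \<otimes>\<^bsub>G\<^esub> b)" using r(7) by simp
  then have e1: "h b \<otimes>\<^bsub>H\<^esub> h a = h a [^]\<^bsub>H\<^esub> (1 + p) \<otimes>\<^bsub>H\<^esub> h b"
    using r(1-3) by (simp add: gh.hom_nat_pow)
  have "h (c \<otimes>\<^bsub>G\<^esub> a) = h (a [^]\<^bsub>G\<^esub> (1 + p) \<otimes>\<^bsub>G\<^esub> b \<otimes>\<^bsub>G\<^esub> c)" using r(8) by simp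
  then have e2: "h c \<otimes>\<^bsub>H\<^esub> h a = h a [^]\<^bsub>H\<^esub> (1 + p) \<otimes>\<^bsub>H\<^esub> h b \<otimes>\<^bsub>H\<^esub> h c"
    using r(1-3) by (simp add: gh.hom_nat_pow)
  have "h (c \<otimes>\<^bsub>G\<^esub> b) = h (a [^]\<^bsub>G\<^esub> p \<otimes>\<^bsub>G\<^esub> b \<otimes>\<^bsub>G\<^esub> c)" using r(9) by simp
  then have e3: "h c \<otimes>\<^bsub>H\<^esub> h b = h a [^]\<^bsub>H\<^esub> p \<otimes>\<^bsub>H\<^esub> h b \<otimes>\<^bsub>H\<^esub> h c"
    using r(1-3) by (simp add: gh.hom_nat_pow)
  have e4: "h a [^]\<^bsub>H\<^esub> (p^2) = \<one>\<^bsub>H\<^esub>" "h b [^]\<^bsub>H\<^esub> p = \<one>\<^bsub>H\<^esub>" "h c [^]\<^bsub>H\<^esub> p = \<one>\<^bsub>H\<^esub>"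
    using r(1-6) by (simp_all add: gh.hom_nat_pow[symmetric])
  show ?thesis unfolding G7_relations_def using r(1-3) e1 e2 e3 e4 by simp
qed

definition trAut :: "('a \<Rightarrow> 'b) \<Rightarrow> 'a monoid \<Rightarrow> 'b monoid \<Rightarrow> ('a \<Rightarrow> 'a) \<Rightarrow> ('b \<Rightarrow> 'b)" where
  "trAut \<phi> G1 G2 \<theta> = (\<lambda>y \<in> carrier G2. \<phi> (\<theta> (inv_into (carrier G1) \<phi> y)))"

lemma trAut_in:
  assumes G1: "group G1" and G2: "group G2" and phi: "\<phi> \<in> iso G1 G2" and K: "K \<subseteq> carrier G1"
    and th: "\<theta> \<in> carrier (AutK G1 K)"
  shows "trAut \<phi> G1 G2 \<theta> \<in> carrier (AutK G2 (\<phi> ` K))"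
proof -
  define \<psi> where "\<psi> = inv_into (carrier G1) \<phi>"
  have psi: "\<psi> \<in> iso G2 G1" unfolding \<psi>_def using group.iso_set_sym[OF G1 phi] .
  have th': "\<theta> \<in> hom G1 G1" "bij_betw \<theta> (carrier G1) (carrier G1)" "\<theta> ` K = K"
    using th by (auto simp: AutK_def auto_def Bij_def)
  have bphi: "bij_betw \<phi> (carrier G1) (carrier G2)" and bpsi: "bij_betw \<psi> (carrier G2) (carrier G1)"
    using phi psi by (auto simp: iso_def)
  have hphi: "\<phi> \<in> hom G1 G2" and hpsi: "\<psi> \<in> hom G2 G1" using phi psi by (auto simp: iso_def)
  have comp_hom: "(\<phi> \<circ> \<theta> \<circ> \<psi>) \<in> hom G2 G2"
    using hphi hpsi th'(1) by (intro hom_compose) auto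
  have e: "trAut \<phi> G1 G2 \<theta> = restrict (\<phi> \<circ> \<theta> \<circ> \<psi>) (carrier G2)"
    by (simp add: trAut_def \<psi>_def restrict_def fun_eq_iff)
  have mc: "\<And>x y. x \<in> carrier G2 \<Longrightarrow> y \<in> carrier G2 \<Longrightarrow> x \<otimes>\<^bsub>G2\<^esub> y \<in> carrier G2"
    using G2 by (simp add: group.is_monoid monoid.m_closed)
  have hom: "trAut \<phi> G1 G2 \<theta> \<in> hom G2 G2"
    unfolding e using comp_hom mc by (auto simp: hom_def Pi_def)
  have "bij_betw (\<phi> \<circ> \<theta> \<circ> \<psi>) (carrier G2) (carrier G2)"
    using bphi bpsi th'(2) by (intro bij_betw_trans) auto
  then have bij: "bij_betw (trAut \<phi> G1 G2 \<theta>) (carrier G2) (carrier G2)"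
    unfolding e by (rule bij_betw_restrict_eq[THEN iffD2])
  have ext: "trAut \<phi> G1 G2 \<theta> \<in> extensional (carrier G2)" by (simp add: trAut_def)
  have img: "trAut \<phi> G1 G2 \<theta> ` (\<phi> ` K) = \<phi> ` K"
  proof -
    have "trAut \<phi> G1 G2 \<theta> (\<phi> k) = \<phi> (\<theta> k)" if "k \<in> K" for k
      using that K bphi by (auto simp: trAut_def bij_betw_def bij_betwE inv_into_f_f)
    then have "trAut \<phi> G1 G2 \<theta> ` (\<phi> ` K) = \<phi> ` (\<theta> ` K)" by (force simp: image_iff)
    then show ?thesis using th'(3) by simp
  qed
  show ?thesis using hom bij ext img by (simp add: AutK_def auto_def Bij_def)
qed

lemma AutK_transport:
  assumes G1: "group G1" and G2: "group G2" and phi: "\<phi> \<in> iso G1 G2" and K: "K \<subseteq> carrier G1"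
  shows "AutK G1 K \<cong> AutK G2 (\<phi> ` K)"
proof -
  define \<psi> where "\<psi> = inv_into (carrier G1) \<phi>"
  have psi: "\<psi> \<in> iso G2 G1" unfolding \<psi>_def using group.iso_set_sym[OF G1 phi] .
  have bphi: "bij_betw \<phi> (carrier G1) (carrier G2)" using phi by (auto simp: iso_def)
  have bpsi: "bij_betw \<psi> (carrier G2) (carrier G1)" using psi by (auto simp: iso_def)
  have K': "\<phi> ` K \<subseteq> carrier G2" using K bphi by (auto simp: bij_betw_def)
  have psiphi: "\<psi> (\<phi> x) = x" if "x \<in> carrier G1" for x
    using that bphi by (simp add: \<psi>_def bij_betw_def inv_into_f_f)
  have phipsi: "\<phi> (\<psi> y) = y" if "y \<in> carrier G2" for y
    using that bphi by (simp add: \<psi>_def bij_betw_def f_inv_into_f)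
  have psiC: "\<psi> y \<in> carrier G1" if "y \<in> carrier G2" for y using that bpsi by (auto simp: bij_betw_def)
  have invpsi: "inv_into (carrier G2) \<psi> x = \<phi> x" if "x \<in> carrier G1" for x
    unfolding \<psi>_def using inv_into_inv_into_eq[OF bphi that] .
  have KK: "\<psi> ` \<phi> ` K = K" using K psiphi by (force simp: image_iff)
  let ?F = "trAut \<phi> G1 G2" and ?F' = "trAut \<psi> G2 G1"
  have Fin: "?F \<theta> \<in> carrier (AutK G2 (\<phi> ` K))" if "\<theta> \<in> carrier (AutK G1 K)" for \<theta>
    by (rule trAut_in[OF G1 G2 phi K that])
  have F'in: "?F' \<eta> \<in> carrier (AutK G1 K)" if "\<eta> \<in> carrier (AutK G2 (\<phi> ` K))" for \<eta>
    using trAut_in[OF G2 G1 psi K' that] KK by simp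
  have autC: "\<theta> x \<in> carrier G" if "\<theta> \<in> carrier (AutK G K')" "x \<in> carrier G" for \<theta> x G K'
    using that by (auto simp: AutK_def auto_def hom_def)
  have autE: "\<theta> \<in> extensional (carrier G)" if "\<theta> \<in> carrier (AutK G K')" for \<theta> G K'
    using that by (auto simp: AutK_def auto_def Bij_def)
  have FF': "?F' (?F \<theta>) = \<theta>" if "\<theta> \<in> carrier (AutK G1 K)" for \<theta>
  proof (rule extensionalityI[of _ "carrier G1"])
    show "?F' (?F \<theta>) \<in> extensional (carrier G1)" by (simp add: trAut_def)
    show "\<theta> \<in> extensional (carrier G1)" using autE[OF that] .
    fix x assume x: "x \<in> carrier G1"
    have px: "\<phi> x \<in> carrier G2" using x bphi by (auto simp: bij_betw_def)
    show "?F' (?F \<theta>) x = \<theta> x"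
      using x px by (simp add: trAut_def invpsi \<psi>_def[symmetric] psiphi autC[OF that])
  qed
  have F'F: "?F (?F' \<eta>) = \<eta>" if "\<eta> \<in> carrier (AutK G2 (\<phi> ` K))" for \<eta>
  proof (rule extensionalityI[of _ "carrier G2"])
    show "?F (?F' \<eta>) \<in> extensional (carrier G2)" by (simp add: trAut_def)
    show "\<eta> \<in> extensional (carrier G2)" using autE[OF that] .
    fix y assume y: "y \<in> carrier G2"
    have "?F (?F' \<eta>) y = \<phi> (\<psi> (\<eta> (\<phi> (\<psi> y))))"
      using y psiC[OF y] by (simp add: trAut_def \<psi>_def[symmetric] invpsi)
    also have "\<dots> = \<eta> y" using y by (simp add: phipsi autC[OF that])
    finally show "?F (?F' \<eta>) y = \<eta> y" .
  qed
  have hom: "?F \<in> hom (AutK G1 K) (AutK G2 (\<phi> ` K))"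
  proof (rule homI)
    fix \<theta> assume "\<theta> \<in> carrier (AutK G1 K)" then show "?F \<theta> \<in> carrier (AutK G2 (\<phi> ` K))" by (rule Fin)
  next
    fix \<theta>1 \<theta>2 assume t1: "\<theta>1 \<in> carrier (AutK G1 K)" and t2: "\<theta>2 \<in> carrier (AutK G1 K)"
    have a1: "\<theta>1 \<in> auto G1" "\<theta>2 \<in> auto G1" using t1 t2 by (auto simp: AutK_def)
    have a2: "?F \<theta>1 \<in> auto G2" "?F \<theta>2 \<in> auto G2" using Fin[OF t1] Fin[OF t2] by (auto simp: AutK_def)
    have m1: "\<theta>1 \<otimes>\<^bsub>AutK G1 K\<^esub> \<theta>2 = compose (carrier G1) \<theta>1 \<theta>2"
      using a1 by (simp add: AutK_def AutoGroup_def BijGroup_def auto_def)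
    have m2: "?F \<theta>1 \<otimes>\<^bsub>AutK G2 (\<phi> ` K)\<^esub> ?F \<theta>2 = compose (carrier G2) (?F \<theta>1) (?F \<theta>2)"
      using a2 by (simp add: AutK_def AutoGroup_def BijGroup_def auto_def)
    show "?F (\<theta>1 \<otimes>\<^bsub>AutK G1 K\<^esub> \<theta>2) = ?F \<theta>1 \<otimes>\<^bsub>AutK G2 (\<phi> ` K)\<^esub> ?F \<theta>2"
      unfolding m1 m2
    proof (rule extensionalityI[of _ "carrier G2"])
      show "?F (compose (carrier G1) \<theta>1 \<theta>2) \<in> extensional (carrier G2)" by (simp add: trAut_def)
      show "compose (carrier G2) (?F \<theta>1) (?F \<theta>2) \<in> extensional (carrier G2)" by (simp add: compose_def)
      fix y assume y: "y \<in> carrier G2"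
      have c2: "\<theta>2 (\<psi> y) \<in> carrier G1" using autC[OF t2 psiC[OF y]] .
      have c2': "\<phi> (\<theta>2 (\<psi> y)) \<in> carrier G2" using c2 bphi by (auto simp: bij_betw_def)
      show "?F (compose (carrier G1) \<theta>1 \<theta>2) y = compose (carrier G2) (?F \<theta>1) (?F \<theta>2) y"
        using y psiC[OF y] c2 c2' by (simp add: trAut_def compose_def \<psi>_def[symmetric] psiphi)
    qed
  qed
  have bij: "bij_betw ?F (carrier (AutK G1 K)) (carrier (AutK G2 (\<phi> ` K)))"
    by (rule bij_betw_byWitness[where f' = ?F']) (auto simp: FF' F'F Fin F'in)
  show ?thesis using hom bij by (auto intro!: is_isoI isoI)
qed

theorem mainTheorem8:
  fixes G :: "'a monoid" and p :: nat and a b c :: 'a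
  assumes "Factorial_Ring.prime p" and "p \<ge> 5"
    and "is_G7_presentation G p a b c"
  shows "AutK G (generate G {c}) \<cong> dihedral_group p \<times>\<times> integer_mod_group (p * (p - 1))"
proof -
  interpret g7 p using assms(1,2) by unfold_locales
  have grG: "group G" and relG: "G7_relations G p a b c" and genG: "generate G {a, b, c} = carrier G"
    and univ: "\<And>(H :: nat monoid) x y z. group H \<Longrightarrow> G7_relations H p x y z \<Longrightarrow>
        (\<exists>h \<in> hom G H. h a = x \<and> h b = y \<and> h c = z)"
    using assms(3) unfolding is_G7_presentation_def by blast+
  interpret G: group G by (rule grG)
  have abcG: "a \<in> carrier G" "b \<in> carrier G" "c \<in> carrier G" using relG by (auto simp: G7_relations_def)
  define H where "H = encG Hm"
  have grH: "group H" unfolding H_def by (rule enc_group[OF group_Hm])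
  have encI: "to_nat \<in> iso Hm H" unfolding H_def by (rule enc_iso[OF group_Hm])
  have encH: "to_nat \<in> hom Hm H" using encI by (simp add: iso_def)
  have relH: "G7_relations H p (to_nat aa) (to_nat bb) (to_nat cc)"
    by (rule G7_relations_hom[OF encH group_Hm grH G7_Hm])
  obtain h where h: "h \<in> hom G H" "h a = to_nat aa" "h b = to_nat bb" "h c = to_nat cc"
    using univ[OF grH relH] by blast
  interpret gh: group_hom G H h using grG grH h(1) by (simp add: group_hom_def group_hom_axioms_def)
  interpret ge: group_hom Hm H to_nat using group_Hm grH encH by (simp add: group_hom_def group_hom_axioms_def)
  have surj: "h ` carrier G = carrier H"
  proof -
    have "h ` carrier G = h ` generate G {a, b, c}" by (simp add: genG)
    also have "\<dots> = generate H (h ` {a, b, c})" using abcG by (intro gh.generate_img[symmetric]) auto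
    also have "h ` {a, b, c} = to_nat ` {aa, bb, cc}" using h by simp
    also have "generate H (to_nat ` {aa, bb, cc}) = to_nat ` generate Hm {aa, bb, cc}"
      using in_Hm by (intro ge.generate_img) auto
    also have "\<dots> = carrier H" using encI by (simp add: gen_Hm iso_def bij_betw_def)
    finally show ?thesis .
  qed
  have cardH: "card (carrier H) = p^4"
  proof -
    have "bij_betw to_nat (carrier Hm) (carrier H)" using encI by (simp add: iso_def)
    then show ?thesis using card_Hm by (simp add: bij_betw_same_card)
  qed
  have cG: "finite (carrier G) \<and> card (carrier G) \<le> p^4"
    using G.card_G7_le[OF relG genG] p_pos by blast
  have inj: "inj_on h (carrier G)"
  proof (rule eq_card_imp_inj_on)
    show "finite (carrier G)" using cG by simp
    have "card (h ` carrier G) \<le> card (carrier G)" using cG card_image_le by blast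
    then show "card (h ` carrier G) = card (carrier G)" using surj cardH cG by simp
  qed
  have hI: "h \<in> iso G H" using h(1) surj inj by (simp add: iso_def bij_betw_def)
  define \<psi> where "\<psi> = inv_into (carrier Hm) to_nat"
  have psiI: "\<psi> \<in> iso H Hm" unfolding \<psi>_def by (rule group.iso_set_sym[OF group_Hm encI])
  define \<phi> where "\<phi> = \<psi> \<circ> h"
  have phiI: "\<phi> \<in> iso G Hm" unfolding \<phi>_def by (rule iso_set_trans[OF hI psiI])
  have phic: "\<phi> c = cc"
    using in_Hm(3) encI unfolding \<phi>_def \<psi>_def by (simp add: h(4) iso_def bij_betw_def inv_into_f_f)
  interpret gp: group_hom G Hm \<phi> using grG group_Hm phiI by (simp add: group_hom_def group_hom_axioms_def iso_def)
  have "\<phi> ` generate G {c} = generate Hm {cc}"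
    using abcG phic by (simp add: gp.generate_img[symmetric])
  moreover have "generate G {c} \<subseteq> carrier G" using abcG by (intro G.generate_incl) auto
  ultimately have "AutK G (generate G {c}) \<cong> AutK Hm (generate Hm {cc})"
    using AutK_transport[OF grG group_Hm phiI, of "generate G {c}"] by simp
  also have "AutK Hm (generate Hm {cc}) \<cong> dihedral_group p \<times>\<times> integer_mod_group (p * (p - 1))"
    by (rule AutK_Hm_iso)
  finally show ?thesis .
qed

end
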